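(* For any smooth complex-valued potential $V$, the number $k_2:=\dim\big(\mathfrak g^{\mathrm{ess}}_V\cap\langle G(\chi),\sigma M,\rho I\rangle\big)-2$ belongs to $\{0,2\}$, where the span is over all smooth real functions $\chi,\sigma,\rho$ of $t$.
   Context: $\mathfrak g_V$ is the maximal Lie invariance algebra of $i\psi_t+\psi_{xx}+V(t,x)\psi=0$ ($\psi$ complex of real $t,x$; vector fields on $(t,x,\psi,\psi^* )$, $\psi^*$ an additional dependent variable), considered locally. With $M=i\psi\partial_\psi-i\psi^*\partial_{\psi^*}$, $I=\psi\partial_\psi+\psi^*\partial_{\psi^*}$, $D(\tau)=\tau\partial_t+\frac12\tau_tx\partial_x+\frac18\tau_{tt}x^2M$, $G(\chi)=\chi\partial_x+\frac12\chi_txM$, set $\mathfrak g^{\mathrm{ess}}_V:=\mathfrak g_V\cap\langle D(\tau),G(\chi),\sigma(t)M,\rho(t)I\rangle$ (span over all smooth real $\tau,\chi,\sigma,\rho$ of $t$); $\sigma M$, $\rho I$ mean $\sigma(t)M$, $\rho(t)I$. *)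

theory Defs
  imports "HOL-Analysis.Analysis" "HOL-Library.Function_Algebras"
begin

fun iter_dd :: "('a::real_normed_vector \<Rightarrow> 'b::real_normed_vector) \<Rightarrow> 'a list \<Rightarrow> 'a \<Rightarrow> 'b" where
  "iter_dd f [] = f"
| "iter_dd f (h # hs) = (\<lambda>p. frechet_derivative (iter_dd f hs) (at p) h)"

definition smooth_on :: "'a::real_normed_vector set \<Rightarrow> ('a \<Rightarrow> 'b::real_normed_vector) \<Rightarrow> bool" where
  "smooth_on S f \<longleftrightarrow> (\<forall>hs. \<forall>p\<in>S. iter_dd f hs differentiable (at p))"

text \<open>Points (t, x, psi); psi* = conj psi. A real vector field
 tau d_t + xi d_x + eta d_psi + eta* d_psi* (eta* = conj eta) is encoded as the map
 p \<mapsto> (tau p, xi p, eta p).\<close>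

type_synonym pt = "real \<times> real \<times> complex"
type_synonym vfield = "pt \<Rightarrow> real \<times> real \<times> complex"

definition vscale :: "real \<Rightarrow> vfield \<Rightarrow> vfield" where
  "vscale r Q = (\<lambda>p. r *\<^sub>R Q p)"

definition cf_tau :: "vfield \<Rightarrow> pt \<Rightarrow> real" where "cf_tau Q = (\<lambda>p. fst (Q p))"
definition cf_xi  :: "vfield \<Rightarrow> pt \<Rightarrow> real" where "cf_xi Q = (\<lambda>p. fst (snd (Q p)))"
definition cf_eta :: "vfield \<Rightarrow> pt \<Rightarrow> complex" where "cf_eta Q = (\<lambda>p. snd (snd (Q p)))"

definition vf_dom :: "(real \<times> real) set \<Rightarrow> pt set" where
  "vf_dom \<Omega> = {(t, x, \<psi>). (t, x) \<in> \<Omega>}"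

definition dd :: "('a::real_normed_vector \<Rightarrow> 'b::real_normed_vector) \<Rightarrow> 'a \<Rightarrow> 'a \<Rightarrow> 'b" where
  "dd F p h = frechet_derivative F (at p) h"

definition dd2 :: "('a::real_normed_vector \<Rightarrow> 'b::real_normed_vector) \<Rightarrow> 'a \<Rightarrow> 'a \<Rightarrow> 'a \<Rightarrow> 'b" where
  "dd2 F p h k = frechet_derivative (\<lambda>q. dd F q h) (at p) k"

text \<open>Total derivatives of a function F(t,x,psi,psi*) on the jet space.\<close>

definition Tot_t :: "(pt \<Rightarrow> 'b::real_normed_vector) \<Rightarrow> pt \<Rightarrow> complex \<Rightarrow> 'b" where
  "Tot_t F p \<psi>t = dd F p (1, 0, 0) + dd F p (0, 0, \<psi>t)"

definition Tot_x :: "(pt \<Rightarrow> 'b::real_normed_vector) \<Rightarrow> pt \<Rightarrow> complex \<Rightarrow> 'b" where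
  "Tot_x F p \<psi>x = dd F p (0, 1, 0) + dd F p (0, 0, \<psi>x)"

definition Tot_xx :: "(pt \<Rightarrow> 'b::real_normed_vector) \<Rightarrow> pt \<Rightarrow> complex \<Rightarrow> complex \<Rightarrow> 'b" where
  "Tot_xx F p \<psi>x \<psi>xx =
     dd2 F p (0, 1, 0) (0, 1, 0) + dd2 F p (0, 1, 0) (0, 0, \<psi>x)
   + dd2 F p (0, 0, \<psi>x) (0, 1, 0) + dd2 F p (0, 0, \<psi>x) (0, 0, \<psi>x)
   + dd F p (0, 0, \<psi>xx)"

text \<open>pr^(2) Q applied to E = i psi_t + psi_xx + V(t,x) psi, at the jet point
 (t,x,psi, psi_t, psi_x, psi_tx, psi_xx) (psi_tt does not occur).\<close>

definition prE :: "(real \<times> real \<Rightarrow> complex) \<Rightarrow> vfield \<Rightarrow> real \<Rightarrow> real \<Rightarrow> complex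
                   \<Rightarrow> complex \<Rightarrow> complex \<Rightarrow> complex \<Rightarrow> complex \<Rightarrow> complex" where
  "prE V Q t x \<psi> \<psi>t \<psi>x \<psi>tx \<psi>xx =
    (let p = (t, x, \<psi>); \<tau> = cf_tau Q; \<xi> = cf_xi Q; \<eta> = cf_eta Q;
         \<phi>t = Tot_t \<eta> p \<psi>t - of_real (Tot_t \<tau> p \<psi>t) * \<psi>t - of_real (Tot_t \<xi> p \<psi>t) * \<psi>x;
         \<phi>xx = Tot_xx \<eta> p \<psi>x \<psi>xx - of_real (Tot_xx \<tau> p \<psi>x \<psi>xx) * \<psi>t
               - 2 * of_real (Tot_x \<tau> p \<psi>x) * \<psi>tx
               - of_real (Tot_xx \<xi> p \<psi>x \<psi>xx) * \<psi>x
               - 2 * of_real (Tot_x \<xi> p \<psi>x) * \<psi>xx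
     in \<i> * \<phi>t + \<phi>xx
        + (of_real (\<tau> p) * dd V (t, x) (1, 0) + of_real (\<xi> p) * dd V (t, x) (0, 1)) * \<psi>
        + V (t, x) * \<eta> p)"

text \<open>Infinitesimal invariance criterion: pr^(2) Q (E) vanishes on the manifold E = 0
 (the conjugate equation gives the conjugate condition, since eta* = conj eta).\<close>

definition lie_sym :: "(real \<times> real \<Rightarrow> complex) \<Rightarrow> (real \<times> real) set \<Rightarrow> vfield \<Rightarrow> bool" where
  "lie_sym V \<Omega> Q \<longleftrightarrow>
     (\<forall>t x \<psi> \<psi>t \<psi>x \<psi>tx \<psi>xx. (t, x) \<in> \<Omega> \<longrightarrow> \<i> * \<psi>t + \<psi>xx + V (t, x) * \<psi> = 0
        \<longrightarrow> prE V Q t x \<psi> \<psi>t \<psi>x \<psi>tx \<psi>xx = 0)"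

text \<open>Maximal Lie invariance algebra g_V (locally, on the domain Omega x C):
 smooth vector fields on Omega x C (identified with their zero extension).\<close>

definition sym_alg :: "(real \<times> real \<Rightarrow> complex) \<Rightarrow> (real \<times> real) set \<Rightarrow> vfield set" where
  "sym_alg V \<Omega> = {Q. smooth_on (vf_dom \<Omega>) Q \<and> (\<forall>p. p \<notin> vf_dom \<Omega> \<longrightarrow> Q p = 0) \<and> lie_sym V \<Omega> Q}"

definition loc :: "(real \<times> real) set \<Rightarrow> vfield \<Rightarrow> vfield" where
  "loc \<Omega> Q = (\<lambda>p. if p \<in> vf_dom \<Omega> then Q p else 0)"

definition vD :: "(real \<Rightarrow> real) \<Rightarrow> vfield" where
  "vD \<tau> = (\<lambda>(t, x, \<psi>). (\<tau> t, deriv \<tau> t * x / 2,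
                         \<i> * of_real (deriv (deriv \<tau>) t * x\<^sup>2 / 8) * \<psi>))"

definition vG :: "(real \<Rightarrow> real) \<Rightarrow> vfield" where
  "vG chi = (\<lambda>(t, x, \<psi>). (0, chi t, \<i> * of_real (deriv chi t * x / 2) * \<psi>))"

definition vM :: "(real \<Rightarrow> real) \<Rightarrow> vfield" where
  "vM \<sigma> = (\<lambda>(t, x, \<psi>). (0, 0, \<i> * of_real (\<sigma> t) * \<psi>))"

definition vI :: "(real \<Rightarrow> real) \<Rightarrow> vfield" where
  "vI \<rho> = (\<lambda>(t, x, \<psi>). (0, 0, of_real (\<rho> t) * \<psi>))"

definition span_DGMI :: "(real \<times> real) set \<Rightarrow> vfield set" where
  "span_DGMI \<Omega> = {loc \<Omega> (vD \<tau> + vG chi + vM \<sigma> + vI \<rho>) | \<tau> chi \<sigma> \<rho>.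
      smooth_on (fst ` \<Omega>) \<tau> \<and> smooth_on (fst ` \<Omega>) chi \<and> smooth_on (fst ` \<Omega>) \<sigma> \<and> smooth_on (fst ` \<Omega>) \<rho>}"

definition span_GMI :: "(real \<times> real) set \<Rightarrow> vfield set" where
  "span_GMI \<Omega> = {loc \<Omega> (vG chi + vM \<sigma> + vI \<rho>) | chi \<sigma> \<rho>.
      smooth_on (fst ` \<Omega>) chi \<and> smooth_on (fst ` \<Omega>) \<sigma> \<and> smooth_on (fst ` \<Omega>) \<rho>}"

definition ess_alg :: "(real \<times> real \<Rightarrow> complex) \<Rightarrow> (real \<times> real) set \<Rightarrow> vfield set" where
  "ess_alg V \<Omega> = sym_alg V \<Omega> \<inter> span_DGMI \<Omega>"

definition vf_dim :: "vfield set \<Rightarrow> nat" where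
  "vf_dim S = vector_space.dim vscale S"

end

theory Submission
  imports Defs
begin


lemma iter_dd_snoc: "iter_dd f (hs @ [h]) = iter_dd (\<lambda>p. frechet_derivative f (at p) h) hs"
  by (induction hs) auto

definition smn :: "nat \<Rightarrow> 'a::real_normed_vector set \<Rightarrow> ('a \<Rightarrow> 'b::real_normed_vector) \<Rightarrow> bool" where
  "smn n S f \<longleftrightarrow> (\<forall>hs. length hs \<le> n \<longrightarrow> (\<forall>p\<in>S. iter_dd f hs differentiable (at p)))"

lemma smooth_on_smn: "smooth_on S f \<longleftrightarrow> (\<forall>n. smn n S f)"
  unfolding smooth_on_def smn_def by auto

lemma smn_0: "smn 0 S f \<longleftrightarrow> (\<forall>p\<in>S. f differentiable (at p))"
  unfolding smn_def by auto

lemma smn_Suc: "smn (Suc n) S f \<longleftrightarrow> (\<forall>p\<in>S. f differentiable (at p)) \<and>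
   (\<forall>h. smn n S (\<lambda>p. frechet_derivative f (at p) h))"
proof
  assume a: "smn (Suc n) S f"
  show "(\<forall>p\<in>S. f differentiable (at p)) \<and> (\<forall>h. smn n S (\<lambda>p. frechet_derivative f (at p) h))"
  proof
    show "\<forall>p\<in>S. f differentiable (at p)" using a[unfolded smn_def, rule_format, of "[]"] by auto
    show "\<forall>h. smn n S (\<lambda>p. frechet_derivative f (at p) h)"
      using a unfolding smn_def by (metis iter_dd_snoc length_append_singleton not_less_eq_eq)
  qed
next
  assume a: "(\<forall>p\<in>S. f differentiable (at p)) \<and> (\<forall>h. smn n S (\<lambda>p. frechet_derivative f (at p) h))"
  show "smn (Suc n) S f"
    unfolding smn_def
  proof (intro allI impI)
    fix hs :: "'a list" assume l: "length hs \<le> Suc n"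
    show "\<forall>p\<in>S. iter_dd f hs differentiable at p"
    proof (cases "hs = []")
      case True then show ?thesis using a by simp
    next
      case False
      then obtain ks h where hs: "hs = ks @ [h]" by (metis rev_exhaust)
      with l have "length ks \<le> n" by simp
      then show ?thesis using a unfolding smn_def hs iter_dd_snoc by blast
    qed
  qed
qed

lemma smn_mono: "m \<le> n \<Longrightarrow> smn n S f \<Longrightarrow> smn m S f"
  unfolding smn_def by auto

lemma smooth_on_subset: "smooth_on S f \<Longrightarrow> T \<subseteq> S \<Longrightarrow> smooth_on T f"
  unfolding smooth_on_def by auto

lemma has_derivative_cong_open:
  assumes "open U" "p \<in> U" "\<And>q. q \<in> U \<Longrightarrow> f q = g q"
  shows "(f has_derivative f') (at p) \<longleftrightarrow> (g has_derivative f') (at p)"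
  using assms by (metis has_derivative_transform_within_open)

lemma fd_cong:
  assumes "open U" "p \<in> U" "\<And>q. q \<in> U \<Longrightarrow> f q = g q"
  shows "frechet_derivative f (at p) = frechet_derivative g (at p)"
  unfolding frechet_derivative_def using has_derivative_cong_open[OF assms] by simp

lemma diff_cong:
  assumes "open U" "p \<in> U" "\<And>q. q \<in> U \<Longrightarrow> f q = g q"
  shows "f differentiable (at p) \<longleftrightarrow> g differentiable (at p)"
  unfolding differentiable_def using has_derivative_cong_open[OF assms] by simp

lemma iter_dd_cong:
  assumes "open U" "\<And>q. q \<in> U \<Longrightarrow> f q = g q"
  shows "r \<in> U \<Longrightarrow> iter_dd f hs r = iter_dd g hs r"
proof (induction hs arbitrary: r)
  case Nil then show ?case using assms by simp
next
  case (Cons h hs)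
  have "frechet_derivative (iter_dd f hs) (at r) = frechet_derivative (iter_dd g hs) (at r)"
    by (rule fd_cong[OF assms(1) Cons.prems]) (use Cons.IH in auto)
  then show ?case by simp
qed

lemma smn_cong:
  assumes "open U" "S \<subseteq> U" "\<And>q. q \<in> U \<Longrightarrow> f q = g q" "smn n S f"
  shows "smn n S g"
  unfolding smn_def
proof (intro allI impI ballI)
  fix hs :: "'a list" and p assume "length hs \<le> n" "p \<in> S"
  then have "iter_dd f hs differentiable (at p)" using assms(4) unfolding smn_def by auto
  moreover have "\<And>q. q \<in> U \<Longrightarrow> iter_dd f hs q = iter_dd g hs q"
    by (rule iter_dd_cong[OF assms(1)]) (use assms(3) in auto)
  ultimately show "iter_dd g hs differentiable (at p)"
    using diff_cong[OF assms(1)] \<open>p \<in> S\<close> assms(2) by blast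
qed

lemma smooth_on_cong:
  assumes "open U" "S \<subseteq> U" "\<And>q. q \<in> U \<Longrightarrow> f q = g q" "smooth_on S f"
  shows "smooth_on S g"
  using smn_cong[OF assms(1,2), of f g] assms(3,4) unfolding smooth_on_smn by blast

lemma fd_at: "(f has_derivative f') (at p) \<Longrightarrow> frechet_derivative f (at p) = f'"
  using frechet_derivative_at by metis

lemma smn_const: "smn n S (\<lambda>p. c)"
proof (induction n arbitrary: c)
  case 0 then show ?case by (simp add: smn_0)
next
  case (Suc n) then show ?case by (simp add: smn_Suc)
qed

lemma smooth_const: "smooth_on S (\<lambda>p. c)"
  using smn_const smooth_on_smn by blast

lemma smn_add:
  assumes "open S"
  shows "smn n S f \<Longrightarrow> smn n S g \<Longrightarrow> smn n S (\<lambda>p. f p + g p)"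
proof (induction n arbitrary: f g)
  case 0 then show ?case by (auto simp: smn_0)
next
  case (Suc n)
  show ?case unfolding smn_Suc
  proof (intro conjI allI ballI)
    fix p assume "p \<in> S" then show "(\<lambda>p. f p + g p) differentiable (at p)"
      using Suc.prems by (auto simp: smn_Suc)
  next
    fix h
    have e: "frechet_derivative (\<lambda>p. f p + g p) (at q) h =
      frechet_derivative f (at q) h + frechet_derivative g (at q) h" if "q \<in> S" for q
    proof -
      have "f differentiable (at q)" "g differentiable (at q)" using Suc.prems that by (auto simp: smn_Suc)
      then have "((\<lambda>p. f p + g p) has_derivative (\<lambda>h. frechet_derivative f (at q) h + frechet_derivative g (at q) h)) (at q)"
        by (intro has_derivative_add) (simp_all add: frechet_derivative_works[symmetric])
      then show ?thesis by (simp add: fd_at)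
    qed
    have "smn n S (\<lambda>q. frechet_derivative f (at q) h + frechet_derivative g (at q) h)"
      using Suc.IH Suc.prems by (auto simp: smn_Suc)
    then show "smn n S (\<lambda>p. frechet_derivative (\<lambda>p. f p + g p) (at p) h)"
      by (rule smn_cong[OF assms order_refl, rotated]) (use e in auto)
  qed
qed

lemma smn_mult:
  fixes f g :: "'a::real_normed_vector \<Rightarrow> 'b::real_normed_algebra"
  assumes "open S"
  shows "smn n S f \<Longrightarrow> smn n S g \<Longrightarrow> smn n S (\<lambda>p. f p * g p)"
proof (induction n arbitrary: f g)
  case 0 then show ?case by (auto simp: smn_0 intro: differentiable_mult)
next
  case (Suc n)
  show ?case unfolding smn_Suc
  proof (intro conjI allI ballI)
    fix p assume "p \<in> S" then show "(\<lambda>p. f p * g p) differentiable (at p)"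
      using Suc.prems by (auto simp: smn_Suc intro: differentiable_mult)
  next
    fix h
    have e: "frechet_derivative (\<lambda>p. f p * g p) (at q) h =
      f q * frechet_derivative g (at q) h + frechet_derivative f (at q) h * g q" if "q \<in> S" for q
    proof -
      have "f differentiable (at q)" "g differentiable (at q)" using Suc.prems that by (auto simp: smn_Suc)
      then have "((\<lambda>p. f p * g p) has_derivative (\<lambda>h. f q * frechet_derivative g (at q) h + frechet_derivative f (at q) h * g q)) (at q)"
        by (intro has_derivative_mult) (simp_all add: frechet_derivative_works[symmetric])
      then show ?thesis by (simp add: fd_at)
    qed
    have m: "smn n S f" "smn n S g" using Suc.prems smn_mono[of n "Suc n"] by auto
    have "smn n S (\<lambda>q. f q * frechet_derivative g (at q) h + frechet_derivative f (at q) h * g q)"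
      apply (rule smn_add[OF assms])
      using Suc.IH Suc.prems m by (auto simp: smn_Suc)
    then show "smn n S (\<lambda>p. frechet_derivative (\<lambda>p. f p * g p) (at p) h)"
      by (rule smn_cong[OF assms order_refl, rotated]) (use e in auto)
  qed
qed

lemma smn_linear_out:
  assumes "open S" "bounded_linear L"
  shows "smn n S f \<Longrightarrow> smn n S (\<lambda>p. L (f p))"
proof (induction n arbitrary: f)
  case 0 then show ?case using assms by (auto simp: smn_0 intro: bounded_linear_imp_differentiable differentiable_compose[of L, unfolded o_def])
next
  case (Suc n)
  have lin: "\<And>q. L differentiable (at q)" using assms(2) bounded_linear_imp_differentiable by blast
  show ?case unfolding smn_Suc
  proof (intro conjI allI ballI)
    fix p assume "p \<in> S" then show "(\<lambda>p. L (f p)) differentiable (at p)"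
      using Suc.prems lin by (auto simp: smn_Suc intro: differentiable_compose[of L, unfolded o_def])
  next
    fix h
    have e: "frechet_derivative (\<lambda>p. L (f p)) (at q) h = L (frechet_derivative f (at q) h)" if "q \<in> S" for q
    proof -
      have "f differentiable (at q)" using Suc.prems that by (auto simp: smn_Suc)
      then have "((\<lambda>p. L (f p)) has_derivative (\<lambda>h. L (frechet_derivative f (at q) h))) (at q)"
        using bounded_linear.has_derivative[OF assms(2)] frechet_derivative_works by blast
      then show ?thesis by (simp add: fd_at)
    qed
    have "smn n S (\<lambda>q. L (frechet_derivative f (at q) h))"
      using Suc.IH Suc.prems by (auto simp: smn_Suc)
    then show "smn n S (\<lambda>p. frechet_derivative (\<lambda>p. L (f p)) (at p) h)"
      by (rule smn_cong[OF assms(1) order_refl, rotated]) (use e in auto)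
  qed
qed

lemma smn_affine_in:
  assumes "open S" "bounded_linear L"
  shows "smn n S f \<Longrightarrow> smn n ((\<lambda>p. L p + a) -` S) (\<lambda>p. f (L p + a))"
proof (induction n arbitrary: f)
  have hL: "((\<lambda>p. L p + a) has_derivative L) (at q)" for q
    using has_derivative_add_const[OF bounded_linear.has_derivative[OF assms(2) has_derivative_ident]] by simp
  {
    case 0 then show ?case
      by (auto simp: smn_0 differentiable_def intro: diff_chain_at[OF hL, unfolded o_def])
  next
    case (Suc n)
    have op: "open ((\<lambda>p. L p + a) -` S)"
      by (intro continuous_open_vimage[OF assms(1)] continuous_add linear_continuous_at[OF assms(2)] continuous_const)
    show ?case unfolding smn_Suc
    proof (intro conjI allI ballI)
      fix p assume "p \<in> (\<lambda>p. L p + a) -` S"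
      then have "f differentiable (at (L p + a))" using Suc.prems by (auto simp: smn_Suc)
      then obtain D where "(f has_derivative D) (at (L p + a))" by (auto simp: differentiable_def)
      from diff_chain_at[OF hL this] show "(\<lambda>p. f (L p + a)) differentiable (at p)"
        by (auto simp: differentiable_def o_def)
    next
      fix h
      have e: "frechet_derivative (\<lambda>p. f (L p + a)) (at q) h = frechet_derivative f (at (L q + a)) (L h)"
        if "q \<in> (\<lambda>p. L p + a) -` S" for q
      proof -
        have "f differentiable (at (L q + a))" using Suc.prems that by (auto simp: smn_Suc)
        then have "((\<lambda>p. f (L p + a)) has_derivative (\<lambda>h. frechet_derivative f (at (L q + a)) (L h))) (at q)"
          using diff_chain_at[OF hL[of q], of f] by (auto simp: frechet_derivative_works o_def)
        then show ?thesis by (simp add: fd_at)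
      qed
      have "smn n ((\<lambda>p. L p + a) -` S) (\<lambda>q. frechet_derivative f (at (L q + a)) (L h))"
        using Suc.IH Suc.prems by (auto simp: smn_Suc)
      then show "smn n ((\<lambda>p. L p + a) -` S) (\<lambda>p. frechet_derivative (\<lambda>p. f (L p + a)) (at p) h)"
        by (rule smn_cong[OF op order_refl, rotated]) (use e in auto)
    qed
  }
qed

lemma smn_linear_in:
  assumes "open S" "bounded_linear L"
  shows "smn n S f \<Longrightarrow> smn n (L -` S) (\<lambda>p. f (L p))"
  using smn_affine_in[OF assms, of n f 0] by simp

lemma smn_pair:
  assumes "open S"
  shows "smn n S f \<Longrightarrow> smn n S g \<Longrightarrow> smn n S (\<lambda>p. (f p, g p))"
proof (induction n arbitrary: f g)
  case 0 then show ?case by (simp add: smn_0 differentiable_def) (metis has_derivative_Pair)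
next
  case (Suc n)
  show ?case unfolding smn_Suc
  proof (intro conjI allI ballI)
    fix p assume "p \<in> S" then show "(\<lambda>p. (f p, g p)) differentiable (at p)"
      using Suc.prems by (simp add: smn_Suc differentiable_def) (metis has_derivative_Pair)
  next
    fix h
    have e: "frechet_derivative (\<lambda>p. (f p, g p)) (at q) h =
      (frechet_derivative f (at q) h, frechet_derivative g (at q) h)" if "q \<in> S" for q
    proof -
      have "f differentiable (at q)" "g differentiable (at q)" using Suc.prems that by (auto simp: smn_Suc)
      then have "((\<lambda>p. (f p, g p)) has_derivative (\<lambda>h. (frechet_derivative f (at q) h, frechet_derivative g (at q) h))) (at q)"
        by (intro has_derivative_Pair) (simp_all add: frechet_derivative_works[symmetric])
      then show ?thesis by (simp add: fd_at)
    qed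
    have "smn n S (\<lambda>q. (frechet_derivative f (at q) h, frechet_derivative g (at q) h))"
      using Suc.IH Suc.prems by (auto simp: smn_Suc)
    then show "smn n S (\<lambda>p. frechet_derivative (\<lambda>p. (f p, g p)) (at p) h)"
      by (rule smn_cong[OF assms order_refl, rotated]) (use e in auto)
  qed
qed

lemma smn_inverse:
  fixes f :: "'a::real_normed_vector \<Rightarrow> 'b::real_normed_field"
  assumes "open S"
  shows "smn n S f \<Longrightarrow> (\<forall>p\<in>S. f p \<noteq> 0) \<Longrightarrow> smn n S (\<lambda>p. inverse (f p))"
proof (induction n arbitrary: f)
  case 0 show ?case unfolding smn_0
  proof
    fix q assume q: "q \<in> S"
    have a: "f differentiable at q" using 0 q by (auto simp: smn_0)
    show "(\<lambda>p. inverse (f p)) differentiable at q"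
      by (rule differentiable_inverse[OF a]) (use 0 q in auto)
  qed
next
  case (Suc n)
  show ?case unfolding smn_Suc
  proof (intro conjI allI ballI)
    fix q assume q: "q \<in> S"
    have a: "f differentiable at q" using Suc q by (auto simp: smn_Suc)
    show "(\<lambda>p. inverse (f p)) differentiable at q"
      by (rule differentiable_inverse[OF a]) (use Suc q in auto)
  next
    fix h
    have e: "frechet_derivative (\<lambda>p. inverse (f p)) (at q) h =
      - (inverse (f q) * frechet_derivative f (at q) h * inverse (f q))" if "q \<in> S" for q
    proof -
      have "f differentiable (at q)" using Suc.prems that by (auto simp: smn_Suc)
      then have "((\<lambda>p. inverse (f p)) has_derivative (\<lambda>h. - (inverse (f q) * frechet_derivative f (at q) h * inverse (f q)))) (at q)"
        using Suc.prems(2) that by (intro Deriv.has_derivative_inverse) (simp_all add: frechet_derivative_works[symmetric])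
      then show ?thesis by (simp add: fd_at)
    qed
    have m: "smn n S f" using Suc.prems smn_mono[of n "Suc n"] by auto
    have i: "smn n S (\<lambda>p. inverse (f p))" using Suc.IH[OF m Suc.prems(2)] .
    have d: "smn n S (\<lambda>q. frechet_derivative f (at q) h)" using Suc.prems by (auto simp: smn_Suc)
    have "smn n S (\<lambda>q. - (inverse (f q) * frechet_derivative f (at q) h * inverse (f q)))"
      using smn_linear_out[OF assms(1) bounded_linear_minus[OF bounded_linear_ident],
          OF smn_mult[OF assms(1) smn_mult[OF assms(1) i d] i]] by simp
    then show "smn n S (\<lambda>p. frechet_derivative (\<lambda>p. inverse (f p)) (at p) h)"
      by (rule smn_cong[OF assms(1) order_refl, rotated]) (use e in auto)
  qed
qed

lemma smooth_add: "open S \<Longrightarrow> smooth_on S f \<Longrightarrow> smooth_on S g \<Longrightarrow> smooth_on S (\<lambda>p. f p + g p)"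
  by (simp add: smooth_on_smn smn_add)

lemma smooth_mult:
  fixes f g :: "'a::real_normed_vector \<Rightarrow> 'b::real_normed_algebra"
  shows "open S \<Longrightarrow> smooth_on S f \<Longrightarrow> smooth_on S g \<Longrightarrow> smooth_on S (\<lambda>p. f p * g p)"
  by (simp add: smooth_on_smn smn_mult)

lemma smooth_linear_out: "open S \<Longrightarrow> bounded_linear L \<Longrightarrow> smooth_on S f \<Longrightarrow> smooth_on S (\<lambda>p. L (f p))"
  by (simp add: smooth_on_smn smn_linear_out)

lemma smooth_linear_in: "open S \<Longrightarrow> bounded_linear L \<Longrightarrow> smooth_on S f \<Longrightarrow> smooth_on (L -` S) (\<lambda>p. f (L p))"
  by (simp add: smooth_on_smn smn_linear_in)

lemma smooth_affine_in: "open S \<Longrightarrow> bounded_linear L \<Longrightarrow> smooth_on S f \<Longrightarrow> smooth_on ((\<lambda>p. L p + a) -` S) (\<lambda>p. f (L p + a))"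
  by (simp add: smooth_on_smn smn_affine_in)

lemma smooth_local:
  assumes "\<And>p. p \<in> S \<Longrightarrow> \<exists>U g. open U \<and> p \<in> U \<and> smooth_on U g \<and> (\<forall>q\<in>U. f q = g q)"
  shows "smooth_on S f"
  unfolding smooth_on_def
proof (intro allI ballI)
  fix hs :: "'a list" and p assume p: "p \<in> S"
  obtain U g where U: "open U" "p \<in> U" "smooth_on U g" "\<forall>q\<in>U. f q = g q" using assms[OF p] by blast
  have "iter_dd g hs differentiable (at p)" using U unfolding smooth_on_def by blast
  moreover have "\<And>q. q \<in> U \<Longrightarrow> iter_dd f hs q = iter_dd g hs q"
    by (rule iter_dd_cong[OF U(1)]) (use U(4) in auto)
  ultimately show "iter_dd f hs differentiable (at p)" using diff_cong[OF U(1) U(2)] by blast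
qed

lemma smooth_pair: "open S \<Longrightarrow> smooth_on S f \<Longrightarrow> smooth_on S g \<Longrightarrow> smooth_on S (\<lambda>p. (f p, g p))"
  by (simp add: smooth_on_smn smn_pair)

lemma smooth_inverse:
  fixes f :: "'a::real_normed_vector \<Rightarrow> 'b::real_normed_field"
  shows "open S \<Longrightarrow> (\<And>p. p \<in> S \<Longrightarrow> f p \<noteq> 0) \<Longrightarrow> smooth_on S f \<Longrightarrow> smooth_on S (\<lambda>p. inverse (f p))"
  by (simp add: smooth_on_smn smn_inverse)

lemma smooth_linear: "bounded_linear L \<Longrightarrow> smooth_on S L"
proof -
  assume L: "bounded_linear L"
  have "smn n S L" for n
  proof (cases n)
    case 0 then show ?thesis using L by (simp add: smn_0 bounded_linear_imp_differentiable)
  next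
    case (Suc m)
    have "frechet_derivative L (at p) h = L h" for p h
      using fd_at[OF bounded_linear.has_derivative[OF L has_derivative_ident]] by simp
    then show ?thesis using Suc L by (simp add: smn_Suc bounded_linear_imp_differentiable smn_const)
  qed
  then show ?thesis by (simp add: smooth_on_smn)
qed

lemma smooth_imp_diff: "smooth_on S f \<Longrightarrow> p \<in> S \<Longrightarrow> f differentiable (at p)"
  unfolding smooth_on_def using iter_dd.simps(1) by metis

lemma smooth_fd: "smooth_on S f \<Longrightarrow> smooth_on S (\<lambda>p. frechet_derivative f (at p) h)"
  unfolding smooth_on_smn using smn_Suc by blast

lemma smooth_deriv:
  fixes f :: "real \<Rightarrow> real"
  assumes "open S" "smooth_on S f"
  shows "smooth_on S (deriv f)"
proof -
  have "frechet_derivative f (at p) 1 = deriv f p" if "p \<in> S" for p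
  proof -
    have "f differentiable (at p)" using smooth_imp_diff assms that by blast
    then have "(f has_field_derivative deriv f p) (at p)"
      by (metis DERIV_deriv_iff_real_differentiable)
    then have "frechet_derivative f (at p) = (\<lambda>h. deriv f p * h)"
      by (intro fd_at) (simp add: has_field_derivative_def)
    then show ?thesis by simp
  qed
  then show ?thesis
    using smooth_on_cong[OF assms(1) order_refl, of "\<lambda>p. frechet_derivative f (at p) 1" "deriv f"]
      smooth_fd[OF assms(2)] by auto
qed

lemma smooth_antideriv:
  fixes F f :: "real \<Rightarrow> real"
  assumes "open S" "\<And>p. p \<in> S \<Longrightarrow> (F has_real_derivative f p) (at p)" "smooth_on S f"
  shows "smooth_on S F"
  unfolding smooth_on_smn
proof
  fix n show "smn n S F"
  proof (cases n)
    case 0 then show ?thesis using assms(2) by (auto simp: smn_0 real_differentiable_def)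
  next
    case (Suc m)
    have e: "frechet_derivative F (at p) h = h * f p" if "p \<in> S" for p h
      using fd_at[OF assms(2)[OF that, unfolded has_field_derivative_def]] by simp
    have "smn m S (\<lambda>p. h * f p)" for h
      using smooth_mult[OF assms(1) smooth_const assms(3)] by (simp add: smooth_on_smn)
    then have "smn m S (\<lambda>p. frechet_derivative F (at p) h)" for h
      by (rule smn_cong[OF assms(1) order_refl, rotated]) (use e in auto)
    then show ?thesis using Suc assms(2) by (auto simp: smn_Suc real_differentiable_def)
  qed
qed




lemma hd_fst:
  fixes g :: "real \<Rightarrow> real" and q :: "real \<times> 'b::real_normed_vector"
  assumes "(g has_real_derivative D) (at (fst q))"
  shows "((\<lambda>q. g (fst q)) has_derivative (\<lambda>h. D * fst h)) (at q)"
  using has_derivative_compose[OF has_derivative_fst[OF has_derivative_ident] assms[unfolded has_field_derivative_def]]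
  by (simp add: mult.commute)

definition PhiF :: "(real \<Rightarrow> real) \<Rightarrow> (real \<Rightarrow> real) \<Rightarrow> (real \<Rightarrow> real) \<Rightarrow> pt \<Rightarrow> complex" where
  "PhiF c s r q = \<i> * of_real (c (fst q) * fst (snd q) / 2) + \<i> * of_real (s (fst q)) + of_real (r (fst q))"

definition PhiD :: "(real \<Rightarrow> real) \<Rightarrow> (real \<Rightarrow> real) \<Rightarrow> (real \<Rightarrow> real) \<Rightarrow> (real \<Rightarrow> real) \<Rightarrow> pt \<Rightarrow> pt \<Rightarrow> complex" where
  "PhiD c c' s' r' q h = \<i> * of_real ((c' (fst q) * fst h) * fst (snd q) / 2 + c (fst q) * fst (snd h) / 2)
        + \<i> * of_real (s' (fst q) * fst h) + of_real (r' (fst q) * fst h)"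

lemma hd_Phi:
  assumes c: "(c has_real_derivative c' (fst q)) (at (fst q))"
    and s: "(s has_real_derivative s' (fst q)) (at (fst q))"
    and r: "(r has_real_derivative r' (fst q)) (at (fst q))"
  shows "(PhiF c s r has_derivative PhiD c c' s' r' q) (at q)"
  unfolding PhiF_def PhiD_def
  apply (rule derivative_eq_intros hd_fst[OF c] hd_fst[OF s] hd_fst[OF r] refl | simp)+
  apply (simp add: fun_eq_iff field_simps)
  done

lemma hd_E:
  assumes c: "(c has_real_derivative c' (fst q)) (at (fst q))"
    and s: "(s has_real_derivative s' (fst q)) (at (fst q))"
    and r: "(r has_real_derivative r' (fst q)) (at (fst q))"
  shows "((\<lambda>q. PhiF c s r q * snd (snd q)) has_derivative
     (\<lambda>h. PhiD c c' s' r' q h * snd (snd q) + PhiF c s r q * snd (snd h))) (at q)"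
  apply (rule derivative_eq_intros hd_Phi[where c'=c' and s'=s' and r'=r', OF c s r] refl | simp)+
  apply (simp add: fun_eq_iff field_simps)
  done

lemma open_vf_dom: "open \<Omega> \<Longrightarrow> open (vf_dom \<Omega>)"
proof -
  assume o: "open \<Omega>"
  have "vf_dom \<Omega> = (\<lambda>q. (fst q, fst (snd q))) -` \<Omega>" by (auto simp: vf_dom_def)
  moreover have "open ((\<lambda>q::pt. (fst q, fst (snd q))) -` \<Omega>)"
    by (rule continuous_open_vimage[OF o]) (intro continuous_intros)
  ultimately show ?thesis by simp
qed

lemma vf_dom_iff: "q \<in> vf_dom \<Omega> \<longleftrightarrow> (fst q, fst (snd q)) \<in> \<Omega>"
  by (cases q) (auto simp: vf_dom_def)

lemma Q_eval: "loc \<Omega> (vG ch + vM \<sigma> + vI \<rho>) q =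
  (if q \<in> vf_dom \<Omega> then (0, ch (fst q), PhiF (deriv ch) \<sigma> \<rho> q * snd (snd q)) else 0)"
  by (cases q) (simp add: loc_def vG_def vM_def vI_def PhiF_def plus_fun_def algebra_simps)

lemma dd_cong: "open U \<Longrightarrow> p \<in> U \<Longrightarrow> (\<And>q. q \<in> U \<Longrightarrow> F q = G q) \<Longrightarrow> dd F p h = dd G p h"
  unfolding dd_def using fd_cong by metis

lemma dd2_cong: "open U \<Longrightarrow> p \<in> U \<Longrightarrow> (\<And>q. q \<in> U \<Longrightarrow> dd F q h = G q) \<Longrightarrow> dd2 F p h k = frechet_derivative G (at p) k"
  unfolding dd2_def using fd_cong by metis

lemma dd_at: "(F has_derivative F') (at p) \<Longrightarrow> dd F p h = F' h"
  unfolding dd_def using fd_at by metis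

lemma dd2_at: "open U \<Longrightarrow> p \<in> U \<Longrightarrow> (\<And>q. q \<in> U \<Longrightarrow> dd F q h = G q) \<Longrightarrow> (G has_derivative G') (at p)
   \<Longrightarrow> dd2 F p h k = G' k"
  using dd2_cong fd_at by metis

lemma prE_formula:
  fixes ch s r :: "real \<Rightarrow> real"
  assumes O: "open \<Omega>" and tx: "(t, x) \<in> \<Omega>"
    and dch: "\<And>u. u \<in> fst ` \<Omega> \<Longrightarrow> (ch has_real_derivative deriv ch u) (at u)"
    and dc: "\<And>u. u \<in> fst ` \<Omega> \<Longrightarrow> (deriv ch has_real_derivative deriv (deriv ch) u) (at u)"
    and ds: "\<And>u. u \<in> fst ` \<Omega> \<Longrightarrow> (s has_real_derivative deriv s u) (at u)"
    and dr: "\<And>u. u \<in> fst ` \<Omega> \<Longrightarrow> (r has_real_derivative deriv r u) (at u)"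
  shows "prE V (loc \<Omega> (vG ch + vM s + vI r)) t x \<psi> \<psi>t \<psi>x \<psi>tx \<psi>xx =
     PhiF (deriv ch) s r (t, x, \<psi>) * (\<i> * \<psi>t + \<psi>xx + V (t, x) * \<psi>)
     + (\<i> * PhiF (deriv (deriv ch)) (deriv s) (deriv r) (t, x, \<psi>) + of_real (ch t) * dd V (t, x) (0, 1)) * \<psi>"
proof -
  define Q where "Q = loc \<Omega> (vG ch + vM s + vI r)"
  define U where "U = vf_dom \<Omega>"
  define p :: pt where "p = (t, x, \<psi>)"
  define c where "c = deriv ch"
  have U: "open U" unfolding U_def using open_vf_dom[OF O] .
  have pU: "p \<in> U" using tx by (simp add: U_def p_def vf_dom_def)
  have fU: "fst q \<in> fst ` \<Omega>" if "q \<in> U" for q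
    using that unfolding U_def vf_dom_iff by (metis fst_conv image_eqI)
  have dchp: "(ch has_real_derivative deriv ch (fst p)) (at (fst p))"
    and dcp: "(c has_real_derivative deriv c (fst p)) (at (fst p))"
    and dsp: "(s has_real_derivative deriv s (fst p)) (at (fst p))"
    and drp: "(r has_real_derivative deriv r (fst p)) (at (fst p))"
    using dch dc ds dr fU[OF pU] c_def by auto
  have tau: "cf_tau Q = (\<lambda>q. 0)" by (simp add: fun_eq_iff cf_tau_def Q_def Q_eval)
  have xi: "cf_xi Q q = ch (fst q)" if "q \<in> U" for q using that by (simp add: cf_xi_def Q_def Q_eval U_def)
  have eta: "cf_eta Q q = PhiF c s r q * snd (snd q)" if "q \<in> U" for q
    using that by (simp add: cf_eta_def Q_def Q_eval U_def c_def)
  have dtau: "dd (cf_tau Q) q h = 0" for q h by (simp add: tau dd_def)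
  have d2tau: "dd2 (cf_tau Q) q h k = 0" for q h k by (simp add: tau dd2_def dd_def)
  have ddxi: "dd (cf_xi Q) q h = c (fst q) * fst h" if "q \<in> U" for q h
  proof -
    have "dd (cf_xi Q) q h = dd (\<lambda>q. ch (fst q)) q h" by (rule dd_cong[OF U that]) (simp add: xi)
    also have "\<dots> = c (fst q) * fst h" by (rule dd_at[OF hd_fst]) (use dch fU that c_def in auto)
    finally show ?thesis .
  qed
  have d2xi: "dd2 (cf_xi Q) p h k = 0" if "fst h = 0" for h k
    using dd2_at[OF U pU, of "cf_xi Q" h "\<lambda>q. 0" "\<lambda>k. 0" k] ddxi that by simp
  have hdE: "((\<lambda>q. PhiF c s r q * snd (snd q)) has_derivative
     (\<lambda>h. PhiD c (deriv c) (deriv s) (deriv r) q h * snd (snd q) + PhiF c s r q * snd (snd h))) (at q)"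
    if "q \<in> U" for q
    by (rule hd_E) (use dch dc ds dr fU that c_def in auto)
  have ddeta: "dd (cf_eta Q) q h = PhiD c (deriv c) (deriv s) (deriv r) q h * snd (snd q) + PhiF c s r q * snd (snd h)"
    if "q \<in> U" for q h
  proof -
    have "dd (cf_eta Q) q h = dd (\<lambda>q. PhiF c s r q * snd (snd q)) q h" by (rule dd_cong[OF U that]) (simp add: eta)
    then show ?thesis using dd_at[OF hdE[OF that]] by simp
  qed
  have G1: "((\<lambda>q. \<i> * of_real (c (fst q) / 2) * snd (snd q)) has_derivative
      (\<lambda>k. \<i> * of_real (deriv c (fst p) * fst k / 2) * snd (snd p) + \<i> * of_real (c (fst p) / 2) * snd (snd k))) (at p)"
  proof -
    show ?thesis
      apply (rule derivative_eq_intros hd_fst[OF dcp] refl | simp)+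
      apply (simp add: fun_eq_iff field_simps)
      done
  qed
  have d2eta1: "dd2 (cf_eta Q) p (0, 1, 0) k = \<i> * of_real (deriv c (fst p) * fst k / 2) * snd (snd p) + \<i> * of_real (c (fst p) / 2) * snd (snd k)" for k
    by (rule dd2_at[OF U pU _ G1]) (simp add: ddeta PhiD_def)
  have d2eta2: "dd2 (cf_eta Q) p (0, 0, a) k = PhiD c (deriv c) (deriv s) (deriv r) p k * a" for k a
    by (rule dd2_at[OF U pU _ has_derivative_mult_left[OF hd_Phi[where c'="deriv c" and s'="deriv s" and r'="deriv r", OF dcp dsp drp]]]) (use ddeta in \<open>auto simp: PhiD_def\<close>)
  show ?thesis
    unfolding Q_def[symmetric] prE_def Let_def Tot_t_def Tot_x_def Tot_xx_def
    apply (simp only: p_def[symmetric] dtau d2tau ddxi[OF pU] d2xi ddeta[OF pU] d2eta1 d2eta2 xi[OF pU] eta[OF pU] d2xi[of "(0,1,0)", simplified] d2xi[of "(0,0,\<psi>x)", simplified])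
    apply (simp add: p_def PhiD_def PhiF_def c_def tau algebra_simps)
    apply (simp add: field_simps)
    done
qed




lemma energy_zero:
  fixes y y' y'' :: "real \<Rightarrow> real"
  assumes t0: "a \<le> t0" "t0 \<le> b"
    and d1: "\<And>t. a \<le> t \<Longrightarrow> t \<le> b \<Longrightarrow> (y has_real_derivative y' t) (at t)"
    and d2: "\<And>t. a \<le> t \<Longrightarrow> t \<le> b \<Longrightarrow> (y' has_real_derivative y'' t) (at t)"
    and bd: "\<And>t. a \<le> t \<Longrightarrow> t \<le> b \<Longrightarrow> \<bar>y'' t\<bar> \<le> K * \<bar>y t\<bar>"
    and z: "y t0 = 0" "y' t0 = 0"
    and t: "a \<le> t" "t \<le> b"
  shows "y t = 0"
proof -
  define L where "L = 1 + \<bar>K\<bar>"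
  define E where "E t = (y t)\<^sup>2 + (y' t)\<^sup>2" for t
  define E' where "E' t = 2 * y t * y' t + 2 * y' t * y'' t" for t
  have dE: "(E has_real_derivative E' t) (at t)" if "a \<le> t" "t \<le> b" for t
    unfolding E_def E'_def
    by (rule derivative_eq_intros d1 d2 that refl | simp)+
  have bE: "\<bar>E' t\<bar> \<le> L * E t" if "a \<le> t" "t \<le> b" for t
  proof -
    have 1: "2 * \<bar>y t\<bar> * \<bar>y' t\<bar> \<le> (y t)\<^sup>2 + (y' t)\<^sup>2"
      using sum_squares_bound[of "\<bar>y t\<bar>" "\<bar>y' t\<bar>"] by (simp add: power2_eq_square)
    have "\<bar>E' t\<bar> \<le> 2 * \<bar>y t\<bar> * \<bar>y' t\<bar> + 2 * \<bar>y' t\<bar> * \<bar>y'' t\<bar>"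
      unfolding E'_def using abs_triangle_ineq[of "2 * y t * y' t" "2 * y' t * y'' t"] by (simp add: abs_mult)
    also have "\<dots> \<le> 2 * \<bar>y t\<bar> * \<bar>y' t\<bar> + 2 * \<bar>y' t\<bar> * (\<bar>K\<bar> * \<bar>y t\<bar>)"
    proof -
      have "K * \<bar>y t\<bar> \<le> \<bar>K\<bar> * \<bar>y t\<bar>" by (intro mult_right_mono) auto
      then show ?thesis using bd[OF that] by (intro add_left_mono mult_left_mono) auto
    qed
    also have "\<dots> = (1 + \<bar>K\<bar>) * (2 * \<bar>y t\<bar> * \<bar>y' t\<bar>)" by (simp add: algebra_simps)
    also have "\<dots> \<le> L * E t" unfolding L_def E_def using 1 by (intro mult_left_mono) auto
    finally show ?thesis .
  qed
  have E0: "E t0 = 0" using z by (simp add: E_def)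
  have Enn: "E t \<ge> 0" for t by (simp add: E_def)
  have "E t = 0"
  proof (cases "t0 \<le> t")
    case True
    define G where "G s = E s * exp (- (L * s))" for s
    have "G t \<le> G t0"
    proof (rule DERIV_nonpos_imp_nonincreasing[OF True])
      fix s assume s: "t0 \<le> s" "s \<le> t"
      have "(G has_real_derivative (E' s * exp (- (L * s)) + E s * (exp (- (L * s)) * (- L)))) (at s)"
      proof -
        have dEs: "(E has_real_derivative E' s) (at s)" using dE s t0 t by auto
        show ?thesis unfolding G_def by (rule derivative_eq_intros dEs refl | simp)+
      qed
      moreover have "E' s * exp (- (L * s)) + E s * (exp (- (L * s)) * (- L)) \<le> 0"
      proof -
        have "E' s \<le> L * E s" using bE[of s] s t0 t by auto
        then have "(E' s - L * E s) * exp (- (L * s)) \<le> 0" by (simp add: mult_nonpos_nonneg)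
        then show ?thesis by (simp add: algebra_simps)
      qed
      ultimately show "\<exists>y. (G has_real_derivative y) (at s) \<and> y \<le> 0" by blast
    qed
    then have "E t * exp (- (L * t)) \<le> 0" by (simp add: G_def E0)
    then show ?thesis using Enn[of t] by (simp add: mult_le_0_iff)
  next
    case False
    then have ft: "t \<le> t0" by simp
    define H where "H s = E s * exp (L * s)" for s
    have "H t \<le> H t0"
    proof (rule DERIV_nonneg_imp_nondecreasing[OF ft])
      fix s assume s: "t \<le> s" "s \<le> t0"
      have "(H has_real_derivative (E' s * exp (L * s) + E s * (exp (L * s) * L))) (at s)"
      proof -
        have dEs: "(E has_real_derivative E' s) (at s)" using dE s t0 t by auto
        show ?thesis unfolding H_def by (rule derivative_eq_intros dEs refl | simp)+
      qed
      moreover have "E' s * exp (L * s) + E s * (exp (L * s) * L) \<ge> 0"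
      proof -
        have "- E' s \<le> L * E s" using bE[of s] s t0 t by auto
        then have "(E' s + L * E s) * exp (L * s) \<ge> 0" by simp
        then show ?thesis by (simp add: algebra_simps)
      qed
      ultimately show "\<exists>y. (H has_real_derivative y) (at s) \<and> y \<ge> 0" by blast
    qed
    then have "E t * exp (L * t) \<le> 0" by (simp add: H_def E0)
    then show ?thesis using Enn[of t] by (simp add: mult_le_0_iff)
  qed
  then show ?thesis unfolding E_def by (simp add: add_nonneg_eq_0_iff)
qed

lemma antideriv_exists:
  fixes g :: "real \<Rightarrow> real"
  assumes T: "open T" "connected T" and g: "continuous_on T g"
  shows "\<exists>G. \<forall>t\<in>T. (G has_real_derivative g t) (at t)"
proof (cases "T = {}")
  case True then show ?thesis by simp
next
  case False
  define a where "a = Inf (ereal ` T)"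
  define b where "b = Sup (ereal ` T)"
  have iv: "is_interval T" using T(2) by (simp add: is_interval_connected_1)
  have Teq: "T = {x. a < ereal x \<and> ereal x < b}"
  proof (intro set_eqI iffI)
    fix x assume x: "x \<in> T"
    obtain e where e: "e > 0" "ball x e \<subseteq> T" using T(1) x open_contains_ball by blast
    have "x - e/2 \<in> T" "x + e/2 \<in> T" using e by (auto simp: dist_real_def subset_iff)
    then have "a \<le> ereal (x - e/2)" "ereal (x + e/2) \<le> b" unfolding a_def b_def
      by (auto intro: Inf_lower Sup_upper)
    moreover have "ereal (x - e/2) < ereal x" "ereal x < ereal (x + e/2)" using e by auto
    ultimately have "a < ereal x" "ereal x < b" by (meson order.strict_trans1 order.strict_trans2)+
    then show "x \<in> {x. a < ereal x \<and> ereal x < b}" by auto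
  next
    fix x assume "x \<in> {x. a < ereal x \<and> ereal x < b}"
    then have "Inf (ereal ` T) < ereal x" "ereal x < Sup (ereal ` T)" by (auto simp: a_def b_def)
    then obtain y z where "y \<in> T" "ereal y < ereal x" "z \<in> T" "ereal x < ereal z"
      by (auto simp: Inf_less_iff less_Sup_iff)
    then show "x \<in> T" using iv unfolding is_interval_1 by (metis ereal_less_eq(3) less_imp_le)
  qed
  obtain x0 where "x0 \<in> T" using False by blast
  then have ab: "a < b" using Teq by (auto dest: order.strict_trans)
  have "\<exists>F. \<forall>x :: real. a < x \<longrightarrow> x < b \<longrightarrow> (F has_vector_derivative g x) (at x)"
  proof (rule einterval_antiderivative[OF ab])
    fix x :: real assume "a < ereal x" "ereal x < b"
    then have "x \<in> T" using Teq by auto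
    then show "isCont g x" using g T(1) continuous_on_eq_continuous_at by blast
  qed
  then obtain F where F: "\<forall>x :: real. a < x \<longrightarrow> x < b \<longrightarrow> (F has_vector_derivative g x) (at x)" by blast
  show ?thesis
    by (rule exI[of _ F]) (use F Teq in \<open>auto simp: has_real_derivative_iff_has_vector_derivative\<close>)
qed

lemma zero_by_density:
  fixes g :: "real \<Rightarrow> 'a::real_normed_vector"
  assumes c: "isCont g t0" and d: "\<And>e. e > 0 \<Longrightarrow> \<exists>t. \<bar>t - t0\<bar> < e \<and> g t = 0"
  shows "g t0 = 0"
proof (rule ccontr)
  assume ne: "g t0 \<noteq> 0"
  obtain dl where dl: "dl > 0" "\<forall>t. dist t t0 < dl \<longrightarrow> dist (g t) (g t0) < norm (g t0)"
    using c ne unfolding continuous_at_eps_delta by (meson zero_less_norm_iff)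
  obtain t where "\<bar>t - t0\<bar> < dl" "g t = 0" using d[OF dl(1)] by blast
  then show False using dl(2) by (auto simp: dist_real_def)
qed

lemma clopen_zero:
  fixes f g :: "real \<Rightarrow> real"
  assumes T: "connected T" and f: "continuous_on T f" and g: "continuous_on T g"
    and op: "open {t\<in>T. f t = 0 \<and> g t = 0}" and ne: "t0 \<in> T" "f t0 = 0" "g t0 = 0"
  shows "\<forall>t\<in>T. f t = 0 \<and> g t = 0"
proof -
  let ?Z = "{t\<in>T. f t = 0 \<and> g t = 0}"
  have "closedin (top_of_set T) ({t\<in>T. f t = 0} \<inter> {t\<in>T. g t = 0})"
    by (intro closedin_Int continuous_closedin_preimage_constant f g)
  moreover have "{t\<in>T. f t = 0} \<inter> {t\<in>T. g t = 0} = ?Z" by auto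
  ultimately have cl: "closedin (top_of_set T) ?Z" by simp
  have opi: "openin (top_of_set T) ?Z" using op by (auto simp: openin_open intro!: exI[of _ ?Z])
  have "?Z = {} \<or> ?Z = T" using T cl opi unfolding connected_clopen by blast
  then have "?Z = T" using ne by auto
  then show ?thesis by auto
qed




definition Cond :: "(real \<times> real \<Rightarrow> complex) \<Rightarrow> (real \<times> real) set \<Rightarrow> (real \<Rightarrow> real) \<Rightarrow> (real \<Rightarrow> real) \<Rightarrow> (real \<Rightarrow> real) \<Rightarrow> bool" where
  "Cond V \<Omega> ch s r \<longleftrightarrow> (\<forall>t x. (t, x) \<in> \<Omega> \<longrightarrow>
     of_real (ch t) * dd V (t, x) (0, 1) = of_real (deriv (deriv ch) t * x / 2 + deriv s t) - \<i> * of_real (deriv r t))"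

lemma smooth_DERIV: "open S \<Longrightarrow> smooth_on S f \<Longrightarrow> u \<in> S \<Longrightarrow> (f has_real_derivative deriv f u) (at u)"
  for f :: "real \<Rightarrow> real"
  using smooth_imp_diff DERIV_deriv_iff_real_differentiable by blast

lemma open_fst_image: "open \<Omega> \<Longrightarrow> open (fst ` \<Omega>)" for \<Omega> :: "(real \<times> real) set"
  by (simp add: open_image_fst)

lemma lie_iff:
  fixes ch s r :: "real \<Rightarrow> real"
  assumes O: "open \<Omega>" and sm: "smooth_on (fst ` \<Omega>) ch" "smooth_on (fst ` \<Omega>) s" "smooth_on (fst ` \<Omega>) r"
  shows "lie_sym V \<Omega> (loc \<Omega> (vG ch + vM s + vI r)) \<longleftrightarrow> Cond V \<Omega> ch s r"
proof -
  have T: "open (fst ` \<Omega>)" using O by (rule open_fst_image)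
  note dch = smooth_DERIV[OF T sm(1)]
  note dc = smooth_DERIV[OF T smooth_deriv[OF T sm(1)]]
  note ds = smooth_DERIV[OF T sm(2)]
  note dr = smooth_DERIV[OF T sm(3)]
  note F = prE_formula[OF O _ dch dc ds dr]
  have key: "\<i> * PhiF (deriv (deriv ch)) (deriv s) (deriv r) (t, x, \<psi>) + of_real (ch t) * dd V (t, x) (0, 1) = 0
     \<longleftrightarrow> of_real (ch t) * dd V (t, x) (0, 1) = of_real (deriv (deriv ch) t * x / 2 + deriv s t) - \<i> * of_real (deriv r t)"
    for t x \<psi>
    by (simp add: PhiF_def algebra_simps)
  show ?thesis
  proof
    assume L: "lie_sym V \<Omega> (loc \<Omega> (vG ch + vM s + vI r))"
    show "Cond V \<Omega> ch s r" unfolding Cond_def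
    proof (intro allI impI)
      fix t x assume tx: "(t, x) \<in> \<Omega>"
      have "prE V (loc \<Omega> (vG ch + vM s + vI r)) t x 1 0 0 0 (- V (t, x)) = 0"
        using L tx unfolding lie_sym_def by simp
      then have "\<i> * PhiF (deriv (deriv ch)) (deriv s) (deriv r) (t, x, 1) + of_real (ch t) * dd V (t, x) (0, 1) = 0"
        using F[OF tx] by simp
      then show "of_real (ch t) * dd V (t, x) (0, 1) = of_real (deriv (deriv ch) t * x / 2 + deriv s t) - \<i> * of_real (deriv r t)"
        using key by blast
    qed
  next
    assume C: "Cond V \<Omega> ch s r"
    show "lie_sym V \<Omega> (loc \<Omega> (vG ch + vM s + vI r))" unfolding lie_sym_def
    proof (intro allI impI)
      fix t x \<psi> \<psi>t \<psi>x \<psi>tx \<psi>xx assume tx: "(t, x) \<in> \<Omega>" and E: "\<i> * \<psi>t + \<psi>xx + V (t, x) * \<psi> = 0"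
      have "\<i> * PhiF (deriv (deriv ch)) (deriv s) (deriv r) (t, x, \<psi>) + of_real (ch t) * dd V (t, x) (0, 1) = 0"
        using key C tx unfolding Cond_def by blast
      then show "prE V (loc \<Omega> (vG ch + vM s + vI r)) t x \<psi> \<psi>t \<psi>x \<psi>tx \<psi>xx = 0"
        using F[OF tx] E by simp
    qed
  qed
qed

lemma bl1: "bounded_linear (\<lambda>y::real. \<i> * complex_of_real (y / 2))"
proof -
  have "(\<lambda>y::real. \<i> * complex_of_real (y / 2)) = (\<lambda>y. y *\<^sub>R (\<i> / 2))"
    by (auto simp: fun_eq_iff scaleR_conv_of_real)
  then show ?thesis using bounded_linear_scaleR_left by metis
qed
lemma bl2: "bounded_linear (\<lambda>y::real. \<i> * complex_of_real y)"
proof -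
  have "(\<lambda>y::real. \<i> * complex_of_real y) = (\<lambda>y. y *\<^sub>R \<i>)"
    by (auto simp: fun_eq_iff scaleR_conv_of_real)
  then show ?thesis using bounded_linear_scaleR_left by metis
qed
lemma bl3: "bounded_linear (\<lambda>q::pt. fst (snd q))"
  by (intro bounded_linear_intros)
lemma bl4: "bounded_linear (\<lambda>q::pt. snd (snd q))"
  by (intro bounded_linear_intros)

lemma field_smooth:
  fixes ch s r :: "real \<Rightarrow> real"
  assumes O: "open \<Omega>" and sm: "smooth_on (fst ` \<Omega>) ch" "smooth_on (fst ` \<Omega>) s" "smooth_on (fst ` \<Omega>) r"
  shows "smooth_on (vf_dom \<Omega>) (loc \<Omega> (vG ch + vM s + vI r))"
proof -
  have T: "open (fst ` \<Omega>)" using O by (rule open_fst_image)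
  define W where "W = (fst :: pt \<Rightarrow> real) -` (fst ` \<Omega>)"
  have W: "open W" unfolding W_def using T by (simp add: open_vimage_fst)
  have UW: "vf_dom \<Omega> \<subseteq> W" unfolding W_def by (auto simp: vf_dom_iff) (metis fst_conv image_eqI)
  have U: "open (vf_dom \<Omega>)" using open_vf_dom[OF O] .
  have f1: "smooth_on W (\<lambda>q. f (fst q))" if "smooth_on (fst ` \<Omega>) f" for f :: "real \<Rightarrow> real"
    using smooth_linear_in[OF T bounded_linear_fst that] unfolding W_def .
  have c: "smooth_on (fst ` \<Omega>) (deriv ch)" using smooth_deriv[OF T sm(1)] .
  have P1: "smooth_on W (\<lambda>q. \<i> * complex_of_real (deriv ch (fst q) * fst (snd q) / 2))"
    using smooth_linear_out[OF W bl1 smooth_mult[OF W f1[OF c] smooth_linear[OF bl3]]] .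
  have P2: "smooth_on W (\<lambda>q. \<i> * complex_of_real (s (fst q)))"
    using smooth_linear_out[OF W bl2 f1[OF sm(2)]] .
  have P3: "smooth_on W (\<lambda>q. complex_of_real (r (fst q)))"
    using smooth_linear_out[OF W bounded_linear_of_real f1[OF sm(3)]] .
  have P: "smooth_on W (PhiF (deriv ch) s r)"
    unfolding PhiF_def using smooth_add[OF W smooth_add[OF W P1 P2] P3] .
  have G: "smooth_on W (\<lambda>q. (0::real, ch (fst q), PhiF (deriv ch) s r q * snd (snd q)))"
    by (intro smooth_pair[OF W] smooth_const f1 sm smooth_mult[OF W] P smooth_linear bl4)
  show ?thesis
    by (rule smooth_on_cong[OF U order_refl _ smooth_on_subset[OF G UW]]) (simp add: Q_eval)
qed

lemma deriv_zero_fun: "deriv (\<lambda>_. (0::real)) = (\<lambda>_. 0)"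
  by (simp add: fun_eq_iff)

lemma vD_zero: "vD (\<lambda>_. 0) = 0"
  by (simp add: fun_eq_iff vD_def deriv_zero_fun zero_prod_def)

lemma mem_S:
  fixes ch s r :: "real \<Rightarrow> real"
  assumes O: "open \<Omega>" and sm: "smooth_on (fst ` \<Omega>) ch" "smooth_on (fst ` \<Omega>) s" "smooth_on (fst ` \<Omega>) r"
    and C: "Cond V \<Omega> ch s r"
  shows "loc \<Omega> (vG ch + vM s + vI r) \<in> ess_alg V \<Omega> \<inter> span_GMI \<Omega>"
proof -
  have "loc \<Omega> (vG ch + vM s + vI r) \<in> sym_alg V \<Omega>"
    unfolding sym_alg_def using field_smooth[OF O sm] lie_iff[OF O sm] C by (auto simp: loc_def)
  moreover have "loc \<Omega> (vG ch + vM s + vI r) \<in> span_DGMI \<Omega>"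
    unfolding span_DGMI_def
    apply (rule CollectI, rule exI[of _ "\<lambda>_. 0"], rule exI[of _ ch], rule exI[of _ s], rule exI[of _ r])
    using sm by (simp add: vD_zero smooth_const)
  moreover have "loc \<Omega> (vG ch + vM s + vI r) \<in> span_GMI \<Omega>"
    unfolding span_GMI_def using sm by blast
  ultimately show ?thesis by (simp add: ess_alg_def)
qed

lemma S_rep:
  assumes O: "open \<Omega>" and Q: "Q \<in> ess_alg V \<Omega> \<inter> span_GMI \<Omega>"
  obtains ch s r where "smooth_on (fst ` \<Omega>) ch" "smooth_on (fst ` \<Omega>) s" "smooth_on (fst ` \<Omega>) r"
    "Q = loc \<Omega> (vG ch + vM s + vI r)" "Cond V \<Omega> ch s r"
proof -
  obtain ch s r where sm: "smooth_on (fst ` \<Omega>) ch" "smooth_on (fst ` \<Omega>) s" "smooth_on (fst ` \<Omega>) r"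
    and Qe: "Q = loc \<Omega> (vG ch + vM s + vI r)"
    using Q unfolding span_GMI_def by blast
  have "lie_sym V \<Omega> Q" using Q by (simp add: ess_alg_def sym_alg_def)
  then have "Cond V \<Omega> ch s r" using lie_iff[OF O sm] Qe by simp
  then show ?thesis using that sm Qe by blast
qed




locale setting =
  fixes V :: "real \<times> real \<Rightarrow> complex" and \<Omega> :: "(real \<times> real) set"
  assumes O: "open \<Omega>" and conn: "connected \<Omega>" and ne: "\<Omega> \<noteq> {}" and smV: "smooth_on \<Omega> V"
begin

abbreviation T where "T \<equiv> fst ` \<Omega>"

definition Vx :: "real \<Rightarrow> real \<Rightarrow> complex" where "Vx t x = dd V (t, x) (0, 1)"

definition ad :: "(real \<Rightarrow> real) \<Rightarrow> (real \<Rightarrow> real) \<Rightarrow> (real \<Rightarrow> real) \<Rightarrow> bool" where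
  "ad ch s r \<longleftrightarrow> smooth_on T ch \<and> smooth_on T s \<and> smooth_on T r \<and> Cond V \<Omega> ch s r"

lemma T_open: "open T" using O by (rule open_fst_image)
lemma T_conn: "connected T" using conn by (intro connected_continuous_image continuous_intros)
lemma T_ne: "T \<noteq> {}" using ne by simp

lemma inT: "(t, x) \<in> \<Omega> \<Longrightarrow> t \<in> T" by (metis fst_conv image_eqI)

lemma slice:
  assumes "(t, x) \<in> \<Omega>"
  obtains e where "e > 0" "\<And>t' x'. \<bar>t' - t\<bar> < e \<Longrightarrow> \<bar>x' - x\<bar> < e \<Longrightarrow> (t', x') \<in> \<Omega>"
proof -
  obtain e where e: "e > 0" "ball (t, x) e \<subseteq> \<Omega>" using O assms open_contains_ball by blast
  show ?thesis
  proof (rule that[of "e/2"])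
    show "e/2 > 0" using e by simp
    fix t' x' assume h: "\<bar>t' - t\<bar> < e/2" "\<bar>x' - x\<bar> < e/2"
    have "dist (t', x') (t, x) \<le> dist (t', x') (t', x) + dist (t', x) (t, x)" by (rule dist_triangle)
    also have "\<dots> = \<bar>x' - x\<bar> + \<bar>t' - t\<bar>" by (simp add: dist_Pair_Pair dist_real_def)
    finally have "dist (t', x') (t, x) \<le> \<bar>t' - t\<bar> + \<bar>x' - x\<bar>" by simp
    then show "(t', x') \<in> \<Omega>" using e h by (auto simp: dist_commute subset_iff)
  qed
qed

lemma slice_ex: "t \<in> T \<Longrightarrow> \<exists>x. (t, x) \<in> \<Omega>" by auto

lemma Vx_cont: "(t, x) \<in> \<Omega> \<Longrightarrow> isCont (\<lambda>p. dd V p (0, 1)) (t, x)"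
proof -
  assume tx: "(t, x) \<in> \<Omega>"
  have "iter_dd V [(0, 1)] differentiable (at (t, x))" using smV tx unfolding smooth_on_def by blast
  then show ?thesis by (simp add: dd_def differentiable_imp_continuous_within)
qed

lemma Vx_cont_t: "(t, x) \<in> \<Omega> \<Longrightarrow> isCont (\<lambda>t. Vx t x) t"
  unfolding Vx_def using Vx_cont
  by (rule continuous_at_compose[of _ "\<lambda>t. (t, x)" "\<lambda>p. dd V p (0, 1)", unfolded o_def, rotated]) (auto intro: continuous_intros)

lemma Vx_smooth: "smooth_on {t. (t, x) \<in> \<Omega>} (\<lambda>t. Vx t x)"
proof -
  have W: "smooth_on \<Omega> (\<lambda>p. frechet_derivative V (at p) (0, 1))" by (rule smooth_fd[OF smV])
  have bl: "bounded_linear (\<lambda>t::real. (t, 0::real))" by (intro bounded_linear_intros)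
  have "smooth_on ((\<lambda>t. (t, 0) + (0, x)) -` \<Omega>) (\<lambda>t. frechet_derivative V (at ((t, 0) + (0, x))) (0, 1))"
    by (rule smooth_affine_in[OF O bl W])
  then show ?thesis by (simp add: Vx_def dd_def vimage_def)
qed

lemma diffC:
  assumes C: "Cond V \<Omega> ch s r" and "(t, x) \<in> \<Omega>" "(t, x') \<in> \<Omega>"
  shows "of_real (ch t) * (Vx t x - Vx t x') = of_real (deriv (deriv ch) t * (x - x') / 2)"
proof -
  have e1: "of_real (ch t) * Vx t x = of_real (deriv (deriv ch) t * x / 2 + deriv s t) - \<i> * of_real (deriv r t)"
    and e2: "of_real (ch t) * Vx t x' = of_real (deriv (deriv ch) t * x' / 2 + deriv s t) - \<i> * of_real (deriv r t)"
    using C assms unfolding Cond_def Vx_def by auto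
  have "of_real (ch t) * (Vx t x - Vx t x') = of_real (ch t) * Vx t x - of_real (ch t) * Vx t x'"
    by (simp add: right_diff_distrib)
  also have "\<dots> = of_real (deriv (deriv ch) t * x / 2 + deriv s t) - of_real (deriv (deriv ch) t * x' / 2 + deriv s t)"
    unfolding e1 e2 by simp
  also have "\<dots> = of_real (deriv (deriv ch) t * (x - x') / 2)"
    by (simp only: of_real_diff[symmetric]) (simp add: algebra_simps diff_divide_distrib)
  finally show ?thesis .
qed

lemma ad_DERIV:
  assumes "ad ch s r" "t \<in> T"
  shows "(ch has_real_derivative deriv ch t) (at t)" "(deriv ch has_real_derivative deriv (deriv ch) t) (at t)"
    "(s has_real_derivative deriv s t) (at t)" "(r has_real_derivative deriv r t) (at t)"
  using assms smooth_DERIV[OF T_open] smooth_deriv[OF T_open] unfolding ad_def by blast+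

lemma ad_cont:
  assumes "ad ch s r"
  shows "continuous_on T ch" "continuous_on T (deriv ch)"
  using ad_DERIV[OF assms] by (metis DERIV_isCont continuous_at_imp_continuous_on)+

lemma uniq:
  assumes A: "ad ch s r" and t0: "t0 \<in> T" "ch t0 = 0" "deriv ch t0 = 0"
  shows "\<forall>t\<in>T. ch t = 0"
proof -
  have C: "Cond V \<Omega> ch s r" using A by (simp add: ad_def)
  let ?Z = "{t\<in>T. ch t = 0 \<and> deriv ch t = 0}"
  have op: "open ?Z" unfolding open_contains_ball
  proof
    fix t1 assume t1: "t1 \<in> ?Z"
    then obtain x1 where x1: "(t1, x1) \<in> \<Omega>" by auto
    obtain e where e: "e > 0" "\<And>t' x'. \<bar>t' - t1\<bar> < e \<Longrightarrow> \<bar>x' - x1\<bar> < e \<Longrightarrow> (t', x') \<in> \<Omega>"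
      using slice[OF x1] by blast
    define d where "d = e / 2"
    have d: "d > 0" "d < e" using e by (auto simp: d_def)
    have inO: "(t, x1) \<in> \<Omega>" "(t, x1 + d) \<in> \<Omega>" if "\<bar>t - t1\<bar> \<le> d" for t
      using e(2) that d by auto
    define k where "k t = Re (Vx t (x1 + d) - Vx t x1)" for t
    have rel: "ch t * k t = deriv (deriv ch) t * d / 2" if "\<bar>t - t1\<bar> \<le> d" for t
    proof -
      have "of_real (ch t) * (Vx t (x1 + d) - Vx t x1) = of_real (deriv (deriv ch) t * (x1 + d - x1) / 2)"
        by (rule diffC[OF C inO(2)[OF that] inO(1)[OF that]])
      from arg_cong[where f=Re, OF this] show ?thesis by (simp add: k_def)
    qed
    have kc: "continuous_on {t1 - d..t1 + d} k"
    proof (intro continuous_at_imp_continuous_on ballI)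
      fix t assume "t \<in> {t1 - d..t1 + d}"
      then have "\<bar>t - t1\<bar> \<le> d" by auto
      then have c1: "isCont (\<lambda>t. Vx t x1) t" and c2: "isCont (\<lambda>t. Vx t (x1 + d)) t"
        using Vx_cont_t[OF inO(1)] Vx_cont_t[OF inO(2)] by auto
      show "isCont k t" unfolding k_def by (rule isCont_Re, rule continuous_diff[OF c2 c1])
    qed
    have "bounded (k ` {t1 - d..t1 + d})" by (rule compact_imp_bounded[OF compact_continuous_image[OF kc compact_Icc]])
    then obtain M where M: "\<And>t. t \<in> {t1 - d..t1 + d} \<Longrightarrow> \<bar>k t\<bar> \<le> M" unfolding bounded_iff by (auto simp del: atLeastAtMost_iff)
    have zero: "ch t = 0" if "t1 - d \<le> t" "t \<le> t1 + d" for t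
    proof (rule energy_zero[of "t1 - d" t1 "t1 + d" ch "deriv ch" "deriv (deriv ch)" "2 * M / d"])
      show "t1 - d \<le> t1" "t1 \<le> t1 + d" using d by auto
      show "ch t1 = 0" "deriv ch t1 = 0" using t1 by auto
      show "t1 - d \<le> t" "t \<le> t1 + d" using that by auto
    next
      fix t assume h: "t1 - d \<le> t" "t \<le> t1 + d"
      then have "\<bar>t - t1\<bar> \<le> d" by auto
      then have tT: "t \<in> T" using inO(1)[of t] inT by blast
      show "(ch has_real_derivative deriv ch t) (at t)" "(deriv ch has_real_derivative deriv (deriv ch) t) (at t)"
        using ad_DERIV[OF A tT] by auto
      have "\<bar>deriv (deriv ch) t\<bar> = \<bar>2 * ch t * k t / d\<bar>" using rel[of t] h d by (simp add: field_simps)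
      also have "\<dots> = 2 * \<bar>ch t\<bar> * \<bar>k t\<bar> / d" using d by (simp add: abs_mult)
      also have "\<dots> \<le> 2 * \<bar>ch t\<bar> * M / d" using M[of t] h d by (intro divide_right_mono mult_left_mono) auto
      finally show "\<bar>deriv (deriv ch) t\<bar> \<le> 2 * M / d * \<bar>ch t\<bar>" by (simp add: field_simps)
    qed
    have "ball t1 d \<subseteq> ?Z"
    proof
      fix t assume "t \<in> ball t1 d"
      then have h: "\<bar>t - t1\<bar> < d" by (simp add: dist_real_def abs_minus_commute)
      then have tT: "t \<in> T" using inO(1)[of t] inT by (meson less_imp_le)
      have z: "ch t = 0" using zero h by auto
      have "((\<lambda>_. 0) has_real_derivative 0) (at t)" by simp
      then have "(ch has_real_derivative 0) (at t)"
        by (rule has_field_derivative_transform_within_open[where S="ball t1 d"])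
          (use \<open>t \<in> ball t1 d\<close> zero in \<open>auto simp: dist_real_def\<close>)
      then have "deriv ch t = 0" using ad_DERIV(1)[OF A tT] DERIV_unique by blast
      then show "t \<in> ?Z" using tT z by simp
    qed
    then show "\<exists>d>0. ball t1 d \<subseteq> ?Z" using d by blast
  qed
  show ?thesis using clopen_zero[OF T_conn ad_cont[OF A] op t0] by blast
qed

lemma density:
  assumes A: "ad ch s r" and nz: "\<exists>t\<in>T. ch t \<noteq> 0" and t0: "t0 \<in> T" and e: "e > 0"
  shows "\<exists>t. \<bar>t - t0\<bar> < e \<and> t \<in> T \<and> ch t \<noteq> 0"
proof (rule ccontr)
  assume H: "\<not> ?thesis"
  obtain e' where e': "e' > 0" "ball t0 e' \<subseteq> T" using T_open t0 open_contains_ball by blast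
  define d where "d = min e e'"
  have d: "d > 0" using e e' by (simp add: d_def)
  have z: "ch t = 0" if "t \<in> ball t0 d" for t
    using H that e' by (auto simp: d_def dist_real_def abs_minus_commute subset_iff)
  have "((\<lambda>_. 0) has_real_derivative 0) (at t0)" by simp
  then have "(ch has_real_derivative 0) (at t0)"
    by (rule has_field_derivative_transform_within_open[where S="ball t0 d"]) (use d z in auto)
  then have "deriv ch t0 = 0" using ad_DERIV(1)[OF A t0] DERIV_unique by blast
  moreover have "ch t0 = 0" using z d by simp
  ultimately have "\<forall>t\<in>T. ch t = 0" using uniq[OF A t0] by blast
  then show False using nz by blast
qed

end




context setting begin
definition qq :: "real \<Rightarrow> real \<Rightarrow> real \<Rightarrow> complex" where
  "qq t x x' = (Vx t x - Vx t x') / of_real (x - x')"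
end

locale setting2 = setting +
  fixes ch0 s0 r0 :: "real \<Rightarrow> real"
  assumes ad0: "ad ch0 s0 r0" and nz0: "\<exists>t\<in>T. ch0 t \<noteq> 0"
begin

lemma qq_val:
  assumes "(t, x) \<in> \<Omega>" "(t, x') \<in> \<Omega>" "x \<noteq> x'" "ch0 t \<noteq> 0"
  shows "qq t x x' = of_real (deriv (deriv ch0) t / (2 * ch0 t))"
proof -
  have C: "Cond V \<Omega> ch0 s0 r0" using ad0 by (simp add: ad_def)
  have "of_real (ch0 t) * (Vx t x - Vx t x') = of_real (deriv (deriv ch0) t * (x - x') / 2)"
    by (rule diffC[OF C assms(1,2)])
  then have "Vx t x - Vx t x' = of_real (deriv (deriv ch0) t * (x - x') / 2) / of_real (ch0 t)"
    using assms(4) by (simp add: field_simps)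
  then show ?thesis using assms(3,4) by (simp add: qq_def field_simps)
qed

lemma qq_cont: "(t, x) \<in> \<Omega> \<Longrightarrow> (t, x') \<in> \<Omega> \<Longrightarrow> isCont (\<lambda>t. qq t x x') t"
  unfolding qq_def divide_inverse by (intro continuous_mult continuous_const continuous_diff Vx_cont_t)

lemma near4:
  assumes "(t, x1) \<in> \<Omega>" "(t, x2) \<in> \<Omega>" "(t, x3) \<in> \<Omega>" "(t, x4) \<in> \<Omega>"
  obtains e where "e > 0" "\<And>t'. \<bar>t' - t\<bar> < e \<Longrightarrow> (t', x1) \<in> \<Omega> \<and> (t', x2) \<in> \<Omega> \<and> (t', x3) \<in> \<Omega> \<and> (t', x4) \<in> \<Omega>"
proof -
  obtain e1 where e1: "e1 > 0" "\<And>t' x'. \<bar>t' - t\<bar> < e1 \<Longrightarrow> \<bar>x' - x1\<bar> < e1 \<Longrightarrow> (t', x') \<in> \<Omega>" using slice[OF assms(1)] by blast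
  obtain e2 where e2: "e2 > 0" "\<And>t' x'. \<bar>t' - t\<bar> < e2 \<Longrightarrow> \<bar>x' - x2\<bar> < e2 \<Longrightarrow> (t', x') \<in> \<Omega>" using slice[OF assms(2)] by blast
  obtain e3 where e3: "e3 > 0" "\<And>t' x'. \<bar>t' - t\<bar> < e3 \<Longrightarrow> \<bar>x' - x3\<bar> < e3 \<Longrightarrow> (t', x') \<in> \<Omega>" using slice[OF assms(3)] by blast
  obtain e4 where e4: "e4 > 0" "\<And>t' x'. \<bar>t' - t\<bar> < e4 \<Longrightarrow> \<bar>x' - x4\<bar> < e4 \<Longrightarrow> (t', x') \<in> \<Omega>" using slice[OF assms(4)] by blast
  define e where "e = min (min e1 e2) (min e3 e4)"
  have "e > 0" using e1 e2 e3 e4 by (simp add: e_def)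
  moreover have "\<bar>t' - t\<bar> < e \<Longrightarrow> (t', x1) \<in> \<Omega> \<and> (t', x2) \<in> \<Omega> \<and> (t', x3) \<in> \<Omega> \<and> (t', x4) \<in> \<Omega>" for t'
    using e1 e2 e3 e4 e1(2)[of t' x1] e2(2)[of t' x2] e3(2)[of t' x3] e4(2)[of t' x4] by (simp add: e_def)
  ultimately show ?thesis using that by blast
qed

lemma quot_eq:
  assumes "(t, x1) \<in> \<Omega>" "(t, x1') \<in> \<Omega>" "(t, x2) \<in> \<Omega>" "(t, x2') \<in> \<Omega>" "x1 \<noteq> x1'" "x2 \<noteq> x2'"
  shows "qq t x1 x1' = qq t x2 x2'" "Im (qq t x1 x1') = 0"
proof -
  have tT: "t \<in> T" using assms(1) inT by blast
  obtain e0 where e0: "e0 > 0" "\<And>t'. \<bar>t' - t\<bar> < e0 \<Longrightarrow> (t', x1) \<in> \<Omega> \<and> (t', x1') \<in> \<Omega> \<and> (t', x2) \<in> \<Omega> \<and> (t', x2') \<in> \<Omega>"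
    using near4[OF assms(1-4)] by blast
  have dens: "\<exists>t'. \<bar>t' - t\<bar> < e \<and> P t'" if e: "e > 0" and P: "\<And>t'. \<bar>t' - t\<bar> < e0 \<Longrightarrow> ch0 t' \<noteq> 0 \<Longrightarrow> P t'" for e P
  proof -
    obtain t' where t': "\<bar>t' - t\<bar> < min e e0" "ch0 t' \<noteq> 0" using density[OF ad0 nz0 tT, of "min e e0"] e e0 by auto
    then show ?thesis using P[of t'] by auto
  qed
  show "qq t x1 x1' = qq t x2 x2'"
  proof -
    have "(\<lambda>t. qq t x1 x1' - qq t x2 x2') t = 0"
    proof (rule zero_by_density[where g="\<lambda>t. qq t x1 x1' - qq t x2 x2'"])
      show "isCont (\<lambda>t. qq t x1 x1' - qq t x2 x2') t" using qq_cont assms by (intro continuous_intros) auto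
    next
      fix e :: real assume "e > 0"
      then show "\<exists>t'. \<bar>t' - t\<bar> < e \<and> qq t' x1 x1' - qq t' x2 x2' = 0"
        by (rule dens) (use e0 qq_val assms(5,6) in auto)
    qed
    then show ?thesis by simp
  qed
  show "Im (qq t x1 x1') = 0"
  proof -
    have "(\<lambda>t. Im (qq t x1 x1')) t = 0"
    proof (rule zero_by_density[where g="\<lambda>t. Im (qq t x1 x1')"])
      show "isCont (\<lambda>t. Im (qq t x1 x1')) t" using qq_cont assms by (intro isCont_Im) auto
    next
      fix e :: real assume "e > 0"
      then show "\<exists>t'. \<bar>t' - t\<bar> < e \<and> Im (qq t' x1 x1') = 0"
        by (rule dens) (use e0 qq_val assms(5,6) in auto)
    qed
    then show ?thesis by simp
  qed
qed

definition xa :: "real \<Rightarrow> real" where "xa t = (SOME x. (t, x) \<in> \<Omega>)"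
definition xb :: "real \<Rightarrow> real" where "xb t = (SOME x. (t, x) \<in> \<Omega> \<and> x \<noteq> xa t)"
definition A :: "real \<Rightarrow> real" where "A t = Re (qq t (xa t) (xb t))"
definition B :: "real \<Rightarrow> complex" where "B t = Vx t (xa t) - of_real (A t * xa t)"

lemma xa: "t \<in> T \<Longrightarrow> (t, xa t) \<in> \<Omega>"
  unfolding xa_def by (rule someI_ex) auto

lemma xb: assumes "t \<in> T" shows "(t, xb t) \<in> \<Omega>" "xb t \<noteq> xa t"
proof -
  obtain e where e: "e > 0" "\<And>t' x'. \<bar>t' - t\<bar> < e \<Longrightarrow> \<bar>x' - xa t\<bar> < e \<Longrightarrow> (t', x') \<in> \<Omega>"
    using slice[OF xa[OF assms]] by blast
  have "(t, xa t + e/2) \<in> \<Omega> \<and> xa t + e/2 \<noteq> xa t" using e by auto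
  then have "\<exists>x. (t, x) \<in> \<Omega> \<and> x \<noteq> xa t" by blast
  then have "(t, xb t) \<in> \<Omega> \<and> xb t \<noteq> xa t" unfolding xb_def by (rule someI_ex)
  then show "(t, xb t) \<in> \<Omega>" "xb t \<noteq> xa t" by auto
qed

lemma qq_A:
  assumes "(t, x) \<in> \<Omega>" "(t, x') \<in> \<Omega>" "x \<noteq> x'"
  shows "qq t x x' = of_real (A t)"
proof -
  have tT: "t \<in> T" using assms(1) inT by blast
  have "qq t x x' = qq t (xa t) (xb t)" by (rule quot_eq(1)[OF assms(1,2) xa[OF tT] xb(1)[OF tT] assms(3)]) (use xb(2)[OF tT] in auto)
  moreover have "Im (qq t (xa t) (xb t)) = 0" by (rule quot_eq(2)[OF xa[OF tT] xb(1)[OF tT] xa[OF tT] xb(1)[OF tT]]) (use xb(2)[OF tT] in auto)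
  ultimately show ?thesis unfolding A_def by (simp add: complex_eq_iff)
qed

lemma VxAB: assumes "(t, x) \<in> \<Omega>" shows "Vx t x = of_real (A t * x) + B t"
proof (cases "x = xa t")
  case True then show ?thesis by (simp add: B_def)
next
  case False
  have tT: "t \<in> T" using assms inT by blast
  have "qq t x (xa t) = of_real (A t)" by (rule qq_A[OF assms xa[OF tT] False])
  then have "Vx t x - Vx t (xa t) = of_real (A t) * of_real (x - xa t)"
    using False by (simp add: qq_def field_simps)
  then show ?thesis by (simp add: B_def algebra_simps)
qed

lemma Vx_smooth_U: "open U \<Longrightarrow> (\<And>t. t \<in> U \<Longrightarrow> (t, c) \<in> \<Omega>) \<Longrightarrow> smooth_on U (\<lambda>t. Vx t c)"
  using smooth_on_subset[OF Vx_smooth] by blast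

lemma A_smooth: "smooth_on T A"
proof (rule smooth_local)
  fix t0 assume t0: "t0 \<in> T"
  then obtain x0 where x0: "(t0, x0) \<in> \<Omega>" by auto
  obtain e where e: "e > 0" "\<And>t' x'. \<bar>t' - t0\<bar> < e \<Longrightarrow> \<bar>x' - x0\<bar> < e \<Longrightarrow> (t', x') \<in> \<Omega>"
    using slice[OF x0] by blast
  define U where "U = ball t0 e"
  have U: "open U" "t0 \<in> U" using e by (auto simp: U_def)
  have inU: "(t, x0) \<in> \<Omega>" "(t, x0 + e/2) \<in> \<Omega>" if "t \<in> U" for t
    using that e by (auto simp: U_def dist_real_def abs_minus_commute)
  define g where "g t = Re (Vx t (x0 + e/2) + - Vx t x0) * (2 / e)" for t
  have "smooth_on U (\<lambda>t. Vx t (x0 + e/2) + - Vx t x0)"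
    by (intro smooth_add[OF U(1)] Vx_smooth_U[OF U(1)] smooth_linear_out[OF U(1) bounded_linear_minus[OF bounded_linear_ident]]) (use inU in auto)
  then have sg: "smooth_on U g" unfolding g_def
    by (rule smooth_linear_out[OF U(1), rotated]) (rule bounded_linear_compose[OF bounded_linear_mult_left bounded_linear_Re])
  have "A t = g t" if "t \<in> U" for t
  proof -
    have "qq t (x0 + e/2) x0 = of_real (A t)" by (rule qq_A[OF inU(2)[OF that] inU(1)[OF that]]) (use e in auto)
    then have "A t = Re (qq t (x0 + e/2) x0)" by simp
    also have "\<dots> = g t" unfolding qq_def g_def using e by (simp add: Re_divide_of_real field_simps)
    finally show ?thesis .
  qed
  then show "\<exists>U g. open U \<and> t0 \<in> U \<and> smooth_on U g \<and> (\<forall>q\<in>U. A q = g q)" using U sg by blast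
qed

lemma B_smooth: "smooth_on T B"
proof (rule smooth_local)
  fix t0 assume t0: "t0 \<in> T"
  then obtain x0 where x0: "(t0, x0) \<in> \<Omega>" by auto
  obtain e where e: "e > 0" "\<And>t' x'. \<bar>t' - t0\<bar> < e \<Longrightarrow> \<bar>x' - x0\<bar> < e \<Longrightarrow> (t', x') \<in> \<Omega>"
    using slice[OF x0] by blast
  define U where "U = ball t0 e"
  have U: "open U" "t0 \<in> U" using e by (auto simp: U_def)
  have inU: "(t, x0) \<in> \<Omega>" if "t \<in> U" for t
    using that e by (auto simp: U_def dist_real_def abs_minus_commute)
  have UT: "U \<subseteq> T" using inU inT by blast
  define g where "g t = Vx t x0 + - of_real (A t * x0)" for t
  have bl: "bounded_linear (\<lambda>a. - complex_of_real (a * x0))"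
  proof -
    have "(\<lambda>a. - complex_of_real (a * x0)) = (\<lambda>a. a *\<^sub>R (- complex_of_real x0))"
      by (auto simp: fun_eq_iff scaleR_conv_of_real)
    then show ?thesis using bounded_linear_scaleR_left by metis
  qed
  have "smooth_on U (\<lambda>t. - complex_of_real (A t * x0))"
    by (rule smooth_linear_out[OF U(1) bl, where f=A, OF smooth_on_subset[OF A_smooth UT]])
  then have sg: "smooth_on U g" unfolding g_def
    by (intro smooth_add[OF U(1)] Vx_smooth_U[OF U(1)]) (use inU in auto)
  have "B t = g t" if "t \<in> U" for t using VxAB[OF inU[OF that]] by (simp add: g_def)
  then show "\<exists>U g. open U \<and> t0 \<in> U \<and> smooth_on U g \<and> (\<forall>q\<in>U. B q = g q)" using U sg by blast
qed

lemma ad_ode: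
  assumes C: "Cond V \<Omega> ch s r" and tT: "t \<in> T"
  shows "deriv (deriv ch) t = 2 * A t * ch t" "of_real (ch t) * B t = of_real (deriv s t) - \<i> * of_real (deriv r t)"
proof -
  obtain x where x: "(t, x) \<in> \<Omega>" using tT by auto
  obtain e where e: "e > 0" "\<And>t' x'. \<bar>t' - t\<bar> < e \<Longrightarrow> \<bar>x' - x\<bar> < e \<Longrightarrow> (t', x') \<in> \<Omega>"
    using slice[OF x] by blast
  have x': "(t, x + e/2) \<in> \<Omega>" using e by auto
  have "of_real (ch t) * (Vx t (x + e/2) - Vx t x) = of_real (deriv (deriv ch) t * (x + e/2 - x) / 2)"
    by (rule diffC[OF C x' x])
  then have "of_real (ch t) * (of_real (A t * (e/2))) = (of_real (deriv (deriv ch) t * (e/2) / 2) :: complex)"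
    using VxAB[OF x] VxAB[OF x'] by (simp add: algebra_simps)
  then have "ch t * A t * (e/2) = deriv (deriv ch) t * (e/2) / 2"
    by (simp only: of_real_mult[symmetric] of_real_eq_iff)
  then show 1: "deriv (deriv ch) t = 2 * A t * ch t" using e by (simp add: field_simps)
  have "of_real (ch t) * Vx t x = of_real (deriv (deriv ch) t * x / 2 + deriv s t) - \<i> * of_real (deriv r t)"
    using C x unfolding Cond_def Vx_def by auto
  then have "of_real (ch t) * (of_real (A t * x) + B t) = of_real (ch t * A t * x + deriv s t) - \<i> * of_real (deriv r t)"
    using VxAB[OF x] 1 by (simp add: algebra_simps)
  then show "of_real (ch t) * B t = of_real (deriv s t) - \<i> * of_real (deriv r t)"
    by (simp add: algebra_simps)
qed

lemma cond_of:
  assumes "\<And>t. t \<in> T \<Longrightarrow> deriv (deriv ch) t = 2 * A t * ch t"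
    "\<And>t. t \<in> T \<Longrightarrow> of_real (ch t) * B t = of_real (deriv s t) - \<i> * of_real (deriv r t)"
  shows "Cond V \<Omega> ch s r"
  unfolding Cond_def
proof (intro allI impI)
  fix t x assume x: "(t, x) \<in> \<Omega>"
  then have tT: "t \<in> T" using inT by blast
  have "of_real (ch t) * dd V (t, x) (0, 1) = of_real (ch t) * (of_real (A t * x) + B t)"
    using VxAB[OF x] by (simp add: Vx_def)
  also have "\<dots> = of_real (ch t * A t * x) + (of_real (deriv s t) - \<i> * of_real (deriv r t))"
    using assms(2)[OF tT] by (simp add: algebra_simps)
  also have "\<dots> = of_real (deriv (deriv ch) t * x / 2 + deriv s t) - \<i> * of_real (deriv r t)"
    using assms(1)[OF tT] by (simp add: algebra_simps)
  finally show "of_real (ch t) * dd V (t, x) (0, 1) = of_real (deriv (deriv ch) t * x / 2 + deriv s t) - \<i> * of_real (deriv r t)" .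
qed

end




lemma alg1:
  fixes u w a F R :: real
  assumes Rn: "R \<noteq> 0" and hR: "R = u\<^sup>2 + w\<^sup>2"
  shows "(1 + 2 * a) * (u\<^sup>2 - w\<^sup>2) / R\<^sup>2 * u + F * w - ((2 * a * u) * R - w * (2 * u * w + 2 * w * (2 * a * u))) / (R * R)
     = F * w + u / R"
proof -
  have h: "(1 + 2 * a) * (u\<^sup>2 - w\<^sup>2) * u - ((2 * a * u) * R - w * (2 * u * w + 2 * w * (2 * a * u))) = u * R"
    unfolding hR by (simp add: power2_eq_square algebra_simps)
  have "(1 + 2 * a) * (u\<^sup>2 - w\<^sup>2) / R\<^sup>2 * u + F * w - ((2 * a * u) * R - w * (2 * u * w + 2 * w * (2 * a * u))) / (R * R)
     = F * w + ((1 + 2 * a) * (u\<^sup>2 - w\<^sup>2) * u - ((2 * a * u) * R - w * (2 * u * w + 2 * w * (2 * a * u)))) / (R * R)"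
    by (simp add: power2_eq_square diff_divide_distrib)
  also have "\<dots> = F * w + u / R" unfolding h using Rn by simp
  finally show ?thesis .
qed
lemma alg2:
  fixes u w a F R :: real
  assumes Rn: "R \<noteq> 0" and hR: "R = u\<^sup>2 + w\<^sup>2"
  shows "(1 + 2 * a) * (u\<^sup>2 - w\<^sup>2) / R\<^sup>2 * w + F * (2 * a * u) + (w * R - u * (2 * u * w + 2 * w * (2 * a * u))) / (R * R)
     = 2 * a * (F * u - w / R)"
proof -
  have h: "(1 + 2 * a) * (u\<^sup>2 - w\<^sup>2) * w + (w * R - u * (2 * u * w + 2 * w * (2 * a * u))) = (- 2 * a * w) * R"
    unfolding hR by (simp add: power2_eq_square algebra_simps)
  have "(1 + 2 * a) * (u\<^sup>2 - w\<^sup>2) / R\<^sup>2 * w + F * (2 * a * u) + (w * R - u * (2 * u * w + 2 * w * (2 * a * u))) / (R * R)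
     = F * (2 * a * u) + ((1 + 2 * a) * (u\<^sup>2 - w\<^sup>2) * w + (w * R - u * (2 * u * w + 2 * w * (2 * a * u)))) / (R * R)"
    by (simp add: power2_eq_square add_divide_distrib)
  also have "\<dots> = 2 * a * (F * u - w / R)" unfolding h using Rn by (simp add: algebra_simps)
  finally show ?thesis .
qed

lemma const_on:
  fixes f :: "real \<Rightarrow> real"
  assumes "connected S" "open S" "\<And>t. t \<in> S \<Longrightarrow> (f has_real_derivative 0) (at t)"
  shows "\<exists>c. \<forall>t\<in>S. f t = c"
proof -
  have "continuous_on S f" using assms(3) by (metis DERIV_isCont continuous_at_imp_continuous_on)
  then obtain c where "\<And>x. x \<in> S \<Longrightarrow> f x = c"
    using DERIV_zero_connected_constant[OF assms(1,2) finite.emptyI, of f] assms(3) by blast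
  then show ?thesis by blast
qed

context setting2 begin

definition v where "v = deriv ch0"
definition R where "R t = (ch0 t)\<^sup>2 + (v t)\<^sup>2" for t
definition fp where "fp t = (1 + 2 * A t) * ((ch0 t)\<^sup>2 - (v t)\<^sup>2) / (R t)\<^sup>2" for t

lemma du: "t \<in> T \<Longrightarrow> (ch0 has_real_derivative v t) (at t)"
  using ad_DERIV(1)[OF ad0] by (simp add: v_def)

lemma C0: "Cond V \<Omega> ch0 s0 r0" using ad0 by (simp add: ad_def)

lemma dv: "t \<in> T \<Longrightarrow> (v has_real_derivative 2 * A t * ch0 t) (at t)"
  using ad_DERIV(2)[OF ad0] ad_ode(1)[OF C0] by (simp add: v_def)

lemma R_pos: "t \<in> T \<Longrightarrow> R t > 0"
proof (rule ccontr)
  assume t: "t \<in> T" and "\<not> R t > 0"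
  then have "R t = 0" unfolding R_def by (smt (verit) sum_power2_ge_zero)
  then have "ch0 t = 0" "deriv ch0 t = 0" unfolding R_def v_def by (simp_all add: sum_power2_eq_zero_iff)
  then have "\<forall>t\<in>T. ch0 t = 0" using uniq[OF ad0 t] by blast
  then show False using nz0 by blast
qed

lemma sm_u: "smooth_on T ch0" using ad0 by (simp add: ad_def)
lemma sm_v: "smooth_on T v" unfolding v_def by (rule smooth_deriv[OF T_open sm_u])
lemma sm_R: "smooth_on T R" unfolding R_def power2_eq_square
  by (intro smooth_add[OF T_open] smooth_mult[OF T_open] sm_u sm_v)
lemma sm_iR: "smooth_on T (\<lambda>t. inverse (R t))"
  by (rule smooth_inverse[OF T_open _ sm_R]) (use R_pos in force)

lemma sm_fp: "smooth_on T fp"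
proof -
  have e: "fp t = (1 + 2 * A t) * ((ch0 t) * (ch0 t) + - (v t * v t)) * (inverse (R t) * inverse (R t))" for t
    by (simp add: fp_def power2_eq_square divide_inverse)
  have "smooth_on T (\<lambda>t. (1 + 2 * A t) * ((ch0 t) * (ch0 t) + - (v t * v t)) * (inverse (R t) * inverse (R t)))"
    by (intro smooth_mult[OF T_open] smooth_add[OF T_open] smooth_const sm_iR sm_u
        smooth_linear_out[OF T_open bounded_linear_minus[OF bounded_linear_ident]]
        smooth_linear_out[OF T_open bounded_linear_mult_right] A_smooth sm_v)
  then show ?thesis unfolding e[symmetric] by simp
qed

lemma cont_of_smooth: "smooth_on T f \<Longrightarrow> continuous_on T f" for f :: "real \<Rightarrow> real"
  by (meson continuous_at_imp_continuous_on differentiable_imp_continuous_within smooth_imp_diff)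

definition F where "F = (SOME F. \<forall>t\<in>T. (F has_real_derivative fp t) (at t))"

lemma dF: "t \<in> T \<Longrightarrow> (F has_real_derivative fp t) (at t)"
proof -
  have "\<exists>F. \<forall>t\<in>T. (F has_real_derivative fp t) (at t)"
    by (rule antideriv_exists[OF T_open T_conn cont_of_smooth[OF sm_fp]])
  then have "\<forall>t\<in>T. (F has_real_derivative fp t) (at t)" unfolding F_def by (rule someI_ex)
  then show "t \<in> T \<Longrightarrow> (F has_real_derivative fp t) (at t)" by blast
qed

lemma sm_F: "smooth_on T F" by (rule smooth_antideriv[OF T_open dF sm_fp])

definition ch1 where "ch1 t = F t * ch0 t - v t / R t" for t
definition d1 where "d1 t = F t * v t + ch0 t / R t" for t

lemma dch1: "t \<in> T \<Longrightarrow> (ch1 has_real_derivative d1 t) (at t)"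
proof -
  assume t: "t \<in> T"
  have Rn: "R t \<noteq> 0" using R_pos[OF t] by simp
  have dR: "(R has_real_derivative 2 * ch0 t * v t + 2 * v t * (2 * A t * ch0 t)) (at t)"
    unfolding R_def by (rule derivative_eq_intros du[OF t] dv[OF t] refl | simp)+
  have "(ch1 has_real_derivative fp t * ch0 t + F t * v t -
      ((2 * A t * ch0 t) * R t - v t * (2 * ch0 t * v t + 2 * v t * (2 * A t * ch0 t))) / (R t * R t)) (at t)"
    unfolding ch1_def
    by (rule derivative_eq_intros dF[OF t] du[OF t] dv[OF t] dR Rn refl | simp)+
  moreover have "fp t * ch0 t + F t * v t -
      ((2 * A t * ch0 t) * R t - v t * (2 * ch0 t * v t + 2 * v t * (2 * A t * ch0 t))) / (R t * R t) = d1 t"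
    unfolding d1_def fp_def by (rule alg1[OF Rn]) (simp add: R_def)
  ultimately show ?thesis by simp
qed

lemma dd1: "t \<in> T \<Longrightarrow> (d1 has_real_derivative 2 * A t * ch1 t) (at t)"
proof -
  assume t: "t \<in> T"
  have Rn: "R t \<noteq> 0" using R_pos[OF t] by simp
  have dR: "(R has_real_derivative 2 * ch0 t * v t + 2 * v t * (2 * A t * ch0 t)) (at t)"
    unfolding R_def by (rule derivative_eq_intros du[OF t] dv[OF t] refl | simp)+
  have "(d1 has_real_derivative fp t * v t + F t * (2 * A t * ch0 t) +
      (v t * R t - ch0 t * (2 * ch0 t * v t + 2 * v t * (2 * A t * ch0 t))) / (R t * R t)) (at t)"
    unfolding d1_def
    by (rule derivative_eq_intros dF[OF t] du[OF t] dv[OF t] dR Rn refl | simp)+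
  moreover have "fp t * v t + F t * (2 * A t * ch0 t) +
      (v t * R t - ch0 t * (2 * ch0 t * v t + 2 * v t * (2 * A t * ch0 t))) / (R t * R t) = 2 * A t * ch1 t"
    unfolding ch1_def fp_def by (rule alg2[OF Rn]) (simp add: R_def)
  ultimately show ?thesis by simp
qed

lemma deriv_ch1: "t \<in> T \<Longrightarrow> deriv ch1 t = d1 t"
  using dch1 DERIV_imp_deriv by blast

lemma ddch1: "t \<in> T \<Longrightarrow> (deriv ch1 has_real_derivative 2 * A t * ch1 t) (at t)"
  by (rule has_field_derivative_transform_within_open[OF dd1 T_open]) (auto simp: deriv_ch1)

lemma ode1: "t \<in> T \<Longrightarrow> deriv (deriv ch1) t = 2 * A t * ch1 t"
  using ddch1 DERIV_imp_deriv by blast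

lemma wr01: "t \<in> T \<Longrightarrow> ch0 t * d1 t - v t * ch1 t = 1"
proof -
  assume t: "t \<in> T"
  have Rn: "R t \<noteq> 0" using R_pos[OF t] by simp
  have "ch0 t * d1 t - v t * ch1 t = (ch0 t * ch0 t + v t * v t) / R t"
    unfolding d1_def ch1_def using Rn by (simp add: field_simps)
  also have "\<dots> = 1" using Rn by (simp add: R_def power2_eq_square)
  finally show ?thesis .
qed

lemma sm_ch1: "smooth_on T ch1"
proof -
  have e: "ch1 t = F t * ch0 t + - (v t * inverse (R t))" for t by (simp add: ch1_def divide_inverse)
  have "smooth_on T (\<lambda>t. F t * ch0 t + - (v t * inverse (R t)))"
    by (intro smooth_add[OF T_open] smooth_mult[OF T_open] sm_F sm_u sm_v sm_iR
        smooth_linear_out[OF T_open bounded_linear_minus[OF bounded_linear_ident]])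
  then show ?thesis unfolding e[symmetric] by simp
qed

definition gs where "gs t = ch1 t * Re (B t)" for t
definition gr where "gr t = - (ch1 t * Im (B t))" for t

lemma sm_gs: "smooth_on T gs" unfolding gs_def
  by (intro smooth_mult[OF T_open] sm_ch1 smooth_linear_out[OF T_open bounded_linear_Re] B_smooth)
lemma sm_gr: "smooth_on T gr" unfolding gr_def
  by (intro smooth_mult[OF T_open] sm_ch1 smooth_linear_out[OF T_open bounded_linear_Im] B_smooth
        smooth_linear_out[OF T_open bounded_linear_minus[OF bounded_linear_ident]])

definition S1 where "S1 = (SOME G. \<forall>t\<in>T. (G has_real_derivative gs t) (at t))"
definition R1 where "R1 = (SOME G. \<forall>t\<in>T. (G has_real_derivative gr t) (at t))"

lemma dS1: "t \<in> T \<Longrightarrow> (S1 has_real_derivative gs t) (at t)"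
proof -
  have "\<exists>G. \<forall>t\<in>T. (G has_real_derivative gs t) (at t)"
    by (rule antideriv_exists[OF T_open T_conn cont_of_smooth[OF sm_gs]])
  then have "\<forall>t\<in>T. (S1 has_real_derivative gs t) (at t)" unfolding S1_def by (rule someI_ex)
  then show "t \<in> T \<Longrightarrow> (S1 has_real_derivative gs t) (at t)" by blast
qed

lemma dR1: "t \<in> T \<Longrightarrow> (R1 has_real_derivative gr t) (at t)"
proof -
  have "\<exists>G. \<forall>t\<in>T. (G has_real_derivative gr t) (at t)"
    by (rule antideriv_exists[OF T_open T_conn cont_of_smooth[OF sm_gr]])
  then have "\<forall>t\<in>T. (R1 has_real_derivative gr t) (at t)" unfolding R1_def by (rule someI_ex)
  then show "t \<in> T \<Longrightarrow> (R1 has_real_derivative gr t) (at t)" by blast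
qed

lemma ad1: "ad ch1 S1 R1"
proof -
  have "Cond V \<Omega> ch1 S1 R1"
  proof (rule cond_of)
    fix t assume t: "t \<in> T"
    show "deriv (deriv ch1) t = 2 * A t * ch1 t" by (rule ode1[OF t])
    have "deriv S1 t = gs t" "deriv R1 t = gr t" using dS1[OF t] dR1[OF t] DERIV_imp_deriv by blast+
    then show "of_real (ch1 t) * B t = of_real (deriv S1 t) - \<i> * of_real (deriv R1 t)"
      by (simp add: gs_def gr_def complex_eq_iff)
  qed
  then show ?thesis unfolding ad_def
    using sm_ch1 smooth_antideriv[OF T_open dS1 sm_gs] smooth_antideriv[OF T_open dR1 sm_gr] by blast
qed

lemma lin2:
  fixes c0 c1 v d1 D D' :: real
  assumes "c0 * d1 - v * c1 = 1" "c0 * D' - v * D = 0" "c1 * D' - d1 * D = 0"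
  shows "D = 0" "D' = 0"
proof -
  have "D = D * (c0 * d1 - v * c1)" using assms(1) by simp
  also have "\<dots> = c0 * (d1 * D) - c1 * (v * D)" by (simp add: algebra_simps)
  also have "\<dots> = c0 * (c1 * D') - c1 * (c0 * D')" using assms(2,3) by (simp add: algebra_simps)
  finally show "D = 0" by simp
  have "D' = D' * (c0 * d1 - v * c1)" using assms(1) by simp
  also have "\<dots> = d1 * (c0 * D') - v * (c1 * D')" by (simp add: algebra_simps)
  also have "\<dots> = d1 * (v * D) - v * (d1 * D)" using assms(2,3) by (simp add: algebra_simps)
  finally show "D' = 0" by simp
qed

lemma sr_deriv:
  assumes "ad ch s r" "t \<in> T"
  shows "deriv s t = ch t * Re (B t)" "deriv r t = - (ch t * Im (B t))"
proof -
  have "of_real (ch t) * B t = of_real (deriv s t) - \<i> * of_real (deriv r t)"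
    using ad_ode(2)[OF _ assms(2)] assms(1) by (simp add: ad_def)
  then show "deriv s t = ch t * Re (B t)" "deriv r t = - (ch t * Im (B t))"
    by (simp_all add: complex_eq_iff)
qed

lemma span_rep:
  assumes A: "ad ch s r"
  shows "\<exists>a b c d. \<forall>t\<in>T. ch t = a * ch0 t + b * ch1 t \<and> deriv ch t = a * deriv ch0 t + b * deriv ch1 t
     \<and> s t = a * s0 t + b * S1 t + c \<and> r t = a * r0 t + b * R1 t + d"
proof -
  have C: "Cond V \<Omega> ch s r" using A by (simp add: ad_def)
  note dch = ad_DERIV(1)[OF A] and ddch = ad_DERIV(2)[OF A]
  have odech: "deriv (deriv ch) t = 2 * A t * ch t" if "t \<in> T" for t using ad_ode(1)[OF C that] .
  define W1 where "W1 t = ch t * d1 t - deriv ch t * ch1 t" for t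
  define W2 where "W2 t = ch0 t * deriv ch t - v t * ch t" for t
  have "(W1 has_real_derivative 0) (at t)" if t: "t \<in> T" for t
  proof -
    have "(W1 has_real_derivative deriv ch t * d1 t + ch t * (2 * A t * ch1 t) - (deriv (deriv ch) t * ch1 t + deriv ch t * d1 t)) (at t)"
      unfolding W1_def by (rule derivative_eq_intros dch[OF t] ddch[OF t] dd1[OF t] dch1[OF t] refl | simp)+
    then show ?thesis using odech[OF t] by (simp add: algebra_simps)
  qed
  then obtain a where a: "\<And>t. t \<in> T \<Longrightarrow> W1 t = a" using const_on[OF T_conn T_open, of W1] by metis
  have "(W2 has_real_derivative 0) (at t)" if t: "t \<in> T" for t
  proof -
    have "(W2 has_real_derivative v t * deriv ch t + ch0 t * deriv (deriv ch) t - (2 * A t * ch0 t * ch t + v t * deriv ch t)) (at t)"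
      unfolding W2_def by (rule derivative_eq_intros dch[OF t] ddch[OF t] du[OF t] dv[OF t] refl | simp)+
    then show ?thesis using odech[OF t] by (simp add: algebra_simps)
  qed
  then obtain b where b: "\<And>t. t \<in> T \<Longrightarrow> W2 t = b" using const_on[OF T_conn T_open, of W2] by metis
  have chrep: "ch t = a * ch0 t + b * ch1 t \<and> deriv ch t = a * deriv ch0 t + b * deriv ch1 t" if t: "t \<in> T" for t
  proof -
    define D where "D = ch t - a * ch0 t - b * ch1 t"
    define D' where "D' = deriv ch t - a * v t - b * d1 t"
    have w: "ch0 t * d1 t - v t * ch1 t = 1" by (rule wr01[OF t])
    have e1: "ch0 t * D' - v t * D = 0"
    proof -
      have "ch0 t * D' - v t * D = W2 t - b * (ch0 t * d1 t - v t * ch1 t)"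
        unfolding D_def D'_def W2_def by (simp add: algebra_simps)
      then show ?thesis using b[OF t] w by simp
    qed
    have e2: "ch1 t * D' - d1 t * D = 0"
    proof -
      have "ch1 t * D' - d1 t * D = - W1 t + a * (ch0 t * d1 t - v t * ch1 t)"
        unfolding D_def D'_def W1_def by (simp add: algebra_simps)
      then show ?thesis using a[OF t] w by simp
    qed
    have "D = 0" "D' = 0" using lin2[OF w e1 e2] by auto
    then show ?thesis unfolding D_def D'_def using deriv_ch1[OF t] by (simp add: v_def)
  qed
  have "((\<lambda>t. s t - a * s0 t - b * S1 t) has_real_derivative 0) (at t)" if t: "t \<in> T" for t
  proof -
    have "((\<lambda>t. s t - a * s0 t - b * S1 t) has_real_derivative deriv s t - a * deriv s0 t - b * gs t) (at t)"
      by (rule derivative_eq_intros ad_DERIV(3)[OF A t] ad_DERIV(3)[OF ad0 t] dS1[OF t] refl | simp)+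
    moreover have "deriv s t - a * deriv s0 t - b * gs t = 0"
      using sr_deriv(1)[OF A t] sr_deriv(1)[OF ad0 t] chrep[OF t] by (simp add: gs_def algebra_simps)
    ultimately show ?thesis by simp
  qed
  then obtain c where c: "\<And>t. t \<in> T \<Longrightarrow> s t - a * s0 t - b * S1 t = c" using const_on[OF T_conn T_open, of "\<lambda>t. s t - a * s0 t - b * S1 t"] by metis
  have "((\<lambda>t. r t - a * r0 t - b * R1 t) has_real_derivative 0) (at t)" if t: "t \<in> T" for t
  proof -
    have "((\<lambda>t. r t - a * r0 t - b * R1 t) has_real_derivative deriv r t - a * deriv r0 t - b * gr t) (at t)"
      by (rule derivative_eq_intros ad_DERIV(4)[OF A t] ad_DERIV(4)[OF ad0 t] dR1[OF t] refl | simp)+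
    moreover have "deriv r t - a * deriv r0 t - b * gr t = 0"
      using sr_deriv(2)[OF A t] sr_deriv(2)[OF ad0 t] chrep[OF t] by (simp add: gr_def algebra_simps)
    ultimately show ?thesis by simp
  qed
  then obtain d where d: "\<And>t. t \<in> T \<Longrightarrow> r t - a * r0 t - b * R1 t = d" using const_on[OF T_conn T_open, of "\<lambda>t. r t - a * r0 t - b * R1 t"] by metis
  show ?thesis
    by (rule exI[of _ a], rule exI[of _ b], rule exI[of _ c], rule exI[of _ d])
      (use chrep c d in \<open>auto simp: algebra_simps\<close>)
qed

end




definition fld :: "(real \<times> real) set \<Rightarrow> (real \<Rightarrow> real) \<Rightarrow> (real \<Rightarrow> real) \<Rightarrow> (real \<Rightarrow> real) \<Rightarrow> vfield" where
  "fld \<Omega> ch s r = loc \<Omega> (vG ch + vM s + vI r)"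

lemma vs: "vector_space vscale"
  by unfold_locales (auto simp: vscale_def plus_fun_def fun_eq_iff scaleR_right_distrib scaleR_left_distrib)

lemma vscale_app: "vscale a Q p = a *\<^sub>R Q p" by (simp add: vscale_def)

lemma field_comb:
  assumes "\<And>t. t \<in> fst ` \<Omega> \<Longrightarrow> ch t = a * c1 t + b * c2 t + c * c3 t + d * c4 t"
    "\<And>t. t \<in> fst ` \<Omega> \<Longrightarrow> deriv ch t = a * deriv c1 t + b * deriv c2 t + c * deriv c3 t + d * deriv c4 t"
    "\<And>t. t \<in> fst ` \<Omega> \<Longrightarrow> s t = a * s1 t + b * s2 t + c * s3 t + d * s4 t"
    "\<And>t. t \<in> fst ` \<Omega> \<Longrightarrow> r t = a * r1 t + b * r2 t + c * r3 t + d * r4 t"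
  shows "fld \<Omega> ch s r = vscale a (fld \<Omega> c1 s1 r1) + vscale b (fld \<Omega> c2 s2 r2) + vscale c (fld \<Omega> c3 s3 r3) + vscale d (fld \<Omega> c4 s4 r4)"
proof (rule ext)
  fix p :: pt
  show "fld \<Omega> ch s r p = (vscale a (fld \<Omega> c1 s1 r1) + vscale b (fld \<Omega> c2 s2 r2) + vscale c (fld \<Omega> c3 s3 r3) + vscale d (fld \<Omega> c4 s4 r4)) p"
  proof (cases "p \<in> vf_dom \<Omega>")
    case False then show ?thesis by (simp only: fld_def Q_eval vscale_app plus_fun_apply) (simp add: False)
  next
    case True
    then have t: "fst p \<in> fst ` \<Omega>" unfolding vf_dom_iff by (metis fst_conv image_eqI)
    show ?thesis using True
      by (simp only: fld_def Q_eval vscale_app plus_fun_apply)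
        (simp add: PhiF_def assms[OF t] scaleR_conv_of_real algebra_simps)
  qed
qed

lemma fld_eval: "(t, x) \<in> \<Omega> \<Longrightarrow> fld \<Omega> ch s r (t, x, \<psi>) = (0, ch t, PhiF (deriv ch) s r (t, x, \<psi>) * \<psi>)"
  by (simp add: fld_def Q_eval vf_dom_def)

lemma deriv_const_fun: "deriv (\<lambda>_. (c::real)) = (\<lambda>_. 0)"
  by (simp add: fun_eq_iff)

lemma deriv_zero_on:
  fixes f :: "real \<Rightarrow> real"
  assumes "open S" "\<And>t. t \<in> S \<Longrightarrow> f t = 0" "t \<in> S"
  shows "deriv f t = 0"
proof -
  have "((\<lambda>_. 0) has_real_derivative 0) (at t)" by simp
  then have "(f has_real_derivative 0) (at t)"
    by (rule has_field_derivative_transform_within_open[OF _ assms(1,3)]) (use assms(2) in auto)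
  then show ?thesis by (rule DERIV_imp_deriv)
qed

context setting begin

definition Fm where "Fm = fld \<Omega> (\<lambda>_. 0) (\<lambda>_. 1) (\<lambda>_. 0)"
definition Fi where "Fi = fld \<Omega> (\<lambda>_. 0) (\<lambda>_. 0) (\<lambda>_. 1)"

lemma ad_const: "ad (\<lambda>_. 0) (\<lambda>_. c) (\<lambda>_. d)"
  unfolding ad_def Cond_def by (simp add: smooth_const deriv_const_fun)

lemma ad_mem: "ad ch s r \<Longrightarrow> fld \<Omega> ch s r \<in> ess_alg V \<Omega> \<inter> span_GMI \<Omega>"
  unfolding ad_def fld_def using mem_S[OF O] by blast

lemma mem_ad: "Q \<in> ess_alg V \<Omega> \<inter> span_GMI \<Omega> \<Longrightarrow> \<exists>ch s r. ad ch s r \<and> Q = fld \<Omega> ch s r"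
  using S_rep[OF O] unfolding ad_def fld_def by metis

lemma Fm_mem: "Fm \<in> ess_alg V \<Omega> \<inter> span_GMI \<Omega>" unfolding Fm_def by (rule ad_mem[OF ad_const])
lemma Fi_mem: "Fi \<in> ess_alg V \<Omega> \<inter> span_GMI \<Omega>" unfolding Fi_def by (rule ad_mem[OF ad_const])

lemma pt0: obtains t0 x0 where "(t0, x0) \<in> \<Omega>" using ne by auto

lemma Fm_eval: "(t, x) \<in> \<Omega> \<Longrightarrow> Fm (t, x, 1) = (0, 0, \<i>)"
  by (simp add: Fm_def fld_eval PhiF_def deriv_const_fun)
lemma Fi_eval: "(t, x) \<in> \<Omega> \<Longrightarrow> Fi (t, x, 1) = (0, 0, 1)"
  by (simp add: Fi_def fld_eval PhiF_def deriv_const_fun)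

lemma Fm_Fi_ne: "Fm \<noteq> Fi"
proof
  assume "Fm = Fi"
  obtain t0 x0 where "(t0, x0) \<in> \<Omega>" by (rule pt0)
  then have "Fm (t0, x0, 1) \<noteq> Fi (t0, x0, 1)" by (simp add: Fm_eval Fi_eval)
  then show False using \<open>Fm = Fi\<close> by simp
qed

lemma case1:
  assumes H: "\<not> (\<exists>ch s r. ad ch s r \<and> (\<exists>t\<in>T. ch t \<noteq> 0))"
  shows "vf_dim (ess_alg V \<Omega> \<inter> span_GMI \<Omega>) = 2"
proof -
  interpret vsp: vector_space vscale by (rule vs)
  let ?S = "ess_alg V \<Omega> \<inter> span_GMI \<Omega>"
  have sub: "{Fm, Fi} \<subseteq> ?S" using Fm_mem Fi_mem by auto
  have sp: "?S \<subseteq> vsp.span {Fm, Fi}"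
  proof
    fix Q assume "Q \<in> ?S"
    then obtain ch s r where A: "ad ch s r" and Q: "Q = fld \<Omega> ch s r" using mem_ad by blast
    have z: "ch t = 0" if "t \<in> T" for t using H A that by blast
    have z1: "deriv ch t = 0" if "t \<in> T" for t by (rule deriv_zero_on[OF T_open z that])
    have z2: "deriv (deriv ch) t = 0" if "t \<in> T" for t by (rule deriv_zero_on[OF T_open z1 that])
    have sr: "deriv s t = 0 \<and> deriv r t = 0" if t: "t \<in> T" for t
    proof -
      obtain x where x: "(t, x) \<in> \<Omega>" using t by auto
      have "of_real (ch t) * dd V (t, x) (0, 1) = of_real (deriv (deriv ch) t * x / 2 + deriv s t) - \<i> * of_real (deriv r t)"
        using A x unfolding ad_def Cond_def by blast
      then have "0 = complex_of_real (deriv s t) - \<i> * of_real (deriv r t)" using z[OF t] z2[OF t] by simp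
      then show ?thesis by (simp add: complex_eq_iff)
    qed
    obtain c where c: "\<And>t. t \<in> T \<Longrightarrow> s t = c"
      using const_on[OF T_conn T_open, of s] ad_DERIV(3)[OF A] sr by metis
    obtain d where d: "\<And>t. t \<in> T \<Longrightarrow> r t = d"
      using const_on[OF T_conn T_open, of r] ad_DERIV(4)[OF A] sr by metis
    have "Q = vscale 0 Fm + vscale 0 Fm + vscale c Fm + vscale d Fi"
      unfolding Q Fm_def Fi_def
      by (rule field_comb) (simp_all add: z z1 c d deriv_const_fun)
    also have "\<dots> = vscale c Fm + vscale d Fi" by simp
    finally show "Q \<in> vsp.span {Fm, Fi}"
      by (simp add: vsp.span_add vsp.span_scale vsp.span_base)
  qed
  have ind: "vsp.independent {Fm, Fi}"
  proof (rule vsp.independent_if_scalars_zero)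
    show "finite {Fm, Fi}" by simp
    fix f :: "vfield \<Rightarrow> real" and Q assume sum: "(\<Sum>x\<in>{Fm, Fi}. vscale (f x) x) = 0" and Q: "Q \<in> {Fm, Fi}"
    obtain t0 x0 where p: "(t0, x0) \<in> \<Omega>" by (rule pt0)
    have "vscale (f Fm) Fm + vscale (f Fi) Fi = 0" using sum Fm_Fi_ne by simp
    then have "(vscale (f Fm) Fm + vscale (f Fi) Fi) (t0, x0, 1) = 0" by simp
    then have "f Fm *\<^sub>R \<i> + f Fi *\<^sub>R 1 = (0::complex)"
      by (simp add: vscale_app Fm_eval[OF p] Fi_eval[OF p] zero_prod_def)
    then have "f Fm = 0 \<and> f Fi = 0" by (simp add: complex_eq_iff scaleR_conv_of_real)
    then show "f Q = 0" using Q by auto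
  qed
  have "vsp.dim ?S = 2" by (rule vsp.dim_unique[OF sub sp ind]) (simp add: Fm_Fi_ne)
  then show ?thesis by (simp add: vf_dim_def)
qed

end

context setting2 begin

definition Q0 where "Q0 = fld \<Omega> ch0 s0 r0"
definition Q1 where "Q1 = fld \<Omega> ch1 S1 R1"

lemma tup:
  assumes Z: "vscale a Q0 + vscale b Q1 + vscale c Fm + vscale d Fi = 0"
  shows "a = 0 \<and> b = 0 \<and> c = 0 \<and> d = 0"
proof -
  obtain t where t: "t \<in> T" using nz0 by blast
  obtain x where x: "(t, x) \<in> \<Omega>" using t by auto
  obtain e where e: "e > 0" "\<And>t' x'. \<bar>t' - t\<bar> < e \<Longrightarrow> \<bar>x' - x\<bar> < e \<Longrightarrow> (t', x') \<in> \<Omega>"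
    using slice[OF x] by blast
  have x': "(t, x + e/2) \<in> \<Omega>" using e by auto
  have ev: "a * ch0 t + b * ch1 t = 0 \<and>
      a *\<^sub>R PhiF (deriv ch0) s0 r0 (t, y, 1) + b *\<^sub>R PhiF (deriv ch1) S1 R1 (t, y, 1) + c *\<^sub>R \<i> + d *\<^sub>R 1 = 0"
    if y: "(t, y) \<in> \<Omega>" for y
  proof -
    have "(vscale a Q0 + vscale b Q1 + vscale c Fm + vscale d Fi) (t, y, 1) = 0" using Z by simp
    then show ?thesis
      by (simp add: vscale_app Q0_def Q1_def fld_eval[OF y] Fm_eval[OF y] Fi_eval[OF y] zero_prod_def)
  qed
  have 1: "a * ch0 t + b * ch1 t = 0" using ev[OF x] by blast
  have "(a *\<^sub>R PhiF (deriv ch0) s0 r0 (t, x, 1) + b *\<^sub>R PhiF (deriv ch1) S1 R1 (t, x, 1) + c *\<^sub>R \<i> + d *\<^sub>R 1)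
      - (a *\<^sub>R PhiF (deriv ch0) s0 r0 (t, x + e/2, 1) + b *\<^sub>R PhiF (deriv ch1) S1 R1 (t, x + e/2, 1) + c *\<^sub>R \<i> + d *\<^sub>R 1) = 0"
    (is "?D = 0") using ev[OF x] ev[OF x'] by simp
  moreover have "Im ?D = - ((a * deriv ch0 t + b * deriv ch1 t) * (e / 4))"
    by (simp add: PhiF_def scaleR_conv_of_real algebra_simps) (simp add: field_simps)
  ultimately have "(a * deriv ch0 t + b * deriv ch1 t) * (e / 4) = 0" by simp
  then have 2: "a * v t + b * d1 t = 0" using e(1) deriv_ch1[OF t] by (simp add: v_def)
  have w: "ch0 t * d1 t - v t * ch1 t = 1" by (rule wr01[OF t])
  have ab: "a = 0 \<and> b = 0"
  proof -
    have "a = a * (ch0 t * d1 t - v t * ch1 t)" using w by simp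
    also have "\<dots> = d1 t * (a * ch0 t + b * ch1 t) - ch1 t * (a * v t + b * d1 t)" by (simp add: algebra_simps)
    finally have a0: "a = 0" using 1 2 by simp
    have "b = b * (ch0 t * d1 t - v t * ch1 t)" using w by simp
    also have "\<dots> = ch0 t * (a * v t + b * d1 t) - v t * (a * ch0 t + b * ch1 t)" by (simp add: algebra_simps)
    finally have "b = 0" using 1 2 by simp
    then show ?thesis using a0 by simp
  qed
  then have "c *\<^sub>R \<i> + d *\<^sub>R 1 = (0::complex)" using ev[OF x] by simp
  then have "c = 0 \<and> d = 0" by (simp add: complex_eq_iff scaleR_conv_of_real)
  then show ?thesis using ab by simp
qed

lemma case2: "vf_dim (ess_alg V \<Omega> \<inter> span_GMI \<Omega>) = 4"
proof -
  interpret vsp: vector_space vscale by (rule vs)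
  let ?S = "ess_alg V \<Omega> \<inter> span_GMI \<Omega>"
  have sub: "{Q0, Q1, Fm, Fi} \<subseteq> ?S"
    using Fm_mem Fi_mem ad_mem[OF ad0] ad_mem[OF ad1] by (auto simp: Q0_def Q1_def)
  have n1: "Q0 \<noteq> Q1" using tup[of 1 "-1" 0 0] by (auto simp: vsp.scale_minus_left)
  have n2: "Q0 \<noteq> Fm" using tup[of 1 0 "-1" 0] by (auto simp: vsp.scale_minus_left)
  have n3: "Q0 \<noteq> Fi" using tup[of 1 0 0 "-1"] by (auto simp: vsp.scale_minus_left)
  have n4: "Q1 \<noteq> Fm" using tup[of 0 1 "-1" 0] by (auto simp: vsp.scale_minus_left)
  have n5: "Q1 \<noteq> Fi" using tup[of 0 1 0 "-1"] by (auto simp: vsp.scale_minus_left)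
  have n6: "Fm \<noteq> Fi" by (rule Fm_Fi_ne)
  have sp: "?S \<subseteq> vsp.span {Q0, Q1, Fm, Fi}"
  proof
    fix Q assume "Q \<in> ?S"
    then obtain ch s r where A: "ad ch s r" and Q: "Q = fld \<Omega> ch s r" using mem_ad by blast
    obtain a b c d where abcd: "\<forall>t\<in>T. ch t = a * ch0 t + b * ch1 t \<and> deriv ch t = a * deriv ch0 t + b * deriv ch1 t
       \<and> s t = a * s0 t + b * S1 t + c \<and> r t = a * r0 t + b * R1 t + d"
      using span_rep[OF A] by blast
    have "Q = vscale a Q0 + vscale b Q1 + vscale c Fm + vscale d Fi"
      unfolding Q Q0_def Q1_def Fm_def Fi_def
      by (rule field_comb) (simp_all add: abcd deriv_const_fun)
    then show "Q \<in> vsp.span {Q0, Q1, Fm, Fi}"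
      by (simp add: vsp.span_add vsp.span_scale vsp.span_base)
  qed
  have ind: "vsp.independent {Q0, Q1, Fm, Fi}"
  proof (rule vsp.independent_if_scalars_zero)
    show "finite {Q0, Q1, Fm, Fi}" by simp
    fix f :: "vfield \<Rightarrow> real" and Q assume sum: "(\<Sum>x\<in>{Q0, Q1, Fm, Fi}. vscale (f x) x) = 0"
      and Q: "Q \<in> {Q0, Q1, Fm, Fi}"
    have "vscale (f Q0) Q0 + vscale (f Q1) Q1 + vscale (f Fm) Fm + vscale (f Fi) Fi = 0"
      using sum n1 n2 n3 n4 n5 n6 by (simp add: add.assoc)
    then have "f Q0 = 0 \<and> f Q1 = 0 \<and> f Fm = 0 \<and> f Fi = 0" by (rule tup)
    then show "f Q = 0" using Q by auto
  qed
  have "vsp.dim ?S = 4" by (rule vsp.dim_unique[OF sub sp ind]) (simp add: n1 n2 n3 n4 n5 n6)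
  then show ?thesis by (simp add: vf_dim_def)
qed

end

lemma (in setting) main: "int (vf_dim (ess_alg V \<Omega> \<inter> span_GMI \<Omega>)) - 2 \<in> {0, 2}"
proof (cases "\<exists>ch s r. ad ch s r \<and> (\<exists>t\<in>T. ch t \<noteq> 0)")
  case False then show ?thesis using case1 by simp
next
  case True
  then obtain ch s r where "ad ch s r" "\<exists>t\<in>T. ch t \<noteq> 0" by blast
  then interpret s2: setting2 V \<Omega> ch s r by unfold_locales
  show ?thesis using s2.case2 by simp
qed

theorem lemma6:
  fixes V :: "real \<times> real \<Rightarrow> complex" and \<Omega> :: "(real \<times> real) set"
  assumes "open \<Omega>" and "connected \<Omega>" and "\<Omega> \<noteq> {}" and "smooth_on \<Omega> V"
  shows "int (vf_dim (ess_alg V \<Omega> \<inter> span_GMI \<Omega>)) - 2 \<in> {0, 2}"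
proof -
  interpret setting V \<Omega> by unfold_locales (use assms in auto)
  show ?thesis by (rule main)
qed


end
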